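(* Let $n\ge2$, $1\le s\le n$, and let $R$ be a lattice congruence of the weak order on $S_{n+1}$ with $f(s,s+1,\emptyset)\in F_R$. Define lattice congruences as follows: - $A$ on $S_s$ by $F_A=\{f(a,b,L)\in F_R: 1\le a<b\le s\}$; - $B$ on $S_{n+1-s}$ by $F_B=\{f(a-s,b-s,L-s): f(a,b,L)\in F_R,\ s+1\le a<b\le n+1\}$, where $L-s=\{x-s:x\in L\}$. Then the lattice quotient $S_{n+1}/R$ is isomorphic to the product poset $S_s/A\times S_{n+1-s}/B$ (componentwise order). If moreover $2\le s\le n-1$, let $R'$ be the lattice congruence on $S_n$ with $$F_{R'}=F_A\cup\{f(a+s-1,b+s-1,L+s-1): f(a,b,L)\in F_B\}\cup D,$$ where $D$ is the downset in the forcing order of $S_n$ generated by $f(s-1,s+1,\emptyset)$ and $f(s-1,s+1,\{s\})$. Then $S_n/R'$ is also isomorphic to $S_s/A\times S_{n+1-s}/B$; in particular $S_{n+1}/R\cong S_n/R'$.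
   Context: $S_m$ is the set of permutations of $[m]$ with the weak order (inclusion of inversion sets), which is a lattice; cover relations are swaps of adjacent entries. A lattice congruence is an equivalence relation compatible with joins and meets. The lattice quotient $S_m/R$ is the set of classes, ordered by $X<Y$ iff $x<y$ for some $x\in X$, $y\in Y$. Fences. $]a,b[=\{a+1,\dots,b-1\}$. For $1\le a<b\le m$ and $L\subseteq\,]a,b[$, the fence $f(a,b,L)$ is the set of cover edges of the weak order on $S_m$ joining two permutations that differ by swapping the adjacent entries $a,b$, with all values of $L$ to the left of $a,b$ and all values of $]a,b[\setminus L$ to their right. Forcing order: $f(a,b,L)\prec f(c,d,M)$ iff $a\le c<d\le b$, $(a,b)\ne(c,d)$, $M=L\cap\,]c,d[$. Reading's theorem. Lattice congruences $R$ of $S_m$ correspond bijectively to downsets $F_R$ of the forcing order, where $F_R$ is the set of fences whose edges join $R$-equivalent permutations; a cover edge joins equivalent permutations iff it lies in a fence of $F_R$. *)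

theory Defs
  imports Main
begin

definition perms :: "nat \<Rightarrow> nat list set" where
  "perms m = {w. distinct w \<and> set w = {1..m}}"

definition inversions :: "nat list \<Rightarrow> (nat \<times> nat) set" where
  "inversions w = {(a,b). a < b \<and> (\<exists>i j. i < j \<and> j < length w \<and> w!i = b \<and> w!j = a)}"

definition weak_le :: "nat list \<Rightarrow> nat list \<Rightarrow> bool" where
  "weak_le u v \<longleftrightarrow> inversions u \<subseteq> inversions v"

definition is_join :: "nat \<Rightarrow> nat list \<Rightarrow> nat list \<Rightarrow> nat list \<Rightarrow> bool" where
  "is_join m x y z \<longleftrightarrow> z \<in> perms m \<and> weak_le x z \<and> weak_le y z \<and>
     (\<forall>u\<in>perms m. weak_le x u \<and> weak_le y u \<longrightarrow> weak_le z u)"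

definition is_meet :: "nat \<Rightarrow> nat list \<Rightarrow> nat list \<Rightarrow> nat list \<Rightarrow> bool" where
  "is_meet m x y z \<longleftrightarrow> z \<in> perms m \<and> weak_le z x \<and> weak_le z y \<and>
     (\<forall>u\<in>perms m. weak_le u x \<and> weak_le u y \<longrightarrow> weak_le u z)"

definition lattice_cong :: "nat \<Rightarrow> (nat list \<times> nat list) set \<Rightarrow> bool" where
  "lattice_cong m R \<longleftrightarrow> equiv (perms m) R \<and>
     (\<forall>x y z j j'. (x,y) \<in> R \<longrightarrow> z \<in> perms m \<longrightarrow> is_join m x z j \<longrightarrow> is_join m y z j' \<longrightarrow> (j,j') \<in> R) \<and>
     (\<forall>x y z j j'. (x,y) \<in> R \<longrightarrow> z \<in> perms m \<longrightarrow> is_meet m x z j \<longrightarrow> is_meet m y z j' \<longrightarrow> (j,j') \<in> R)"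

text \<open>Fences f(a,b,L) are represented by their labels (a,b,L).\<close>
type_synonym fence = "nat \<times> nat \<times> nat set"

definition is_fence :: "nat \<Rightarrow> fence \<Rightarrow> bool" where
  "is_fence m f \<longleftrightarrow> (case f of (a,b,L) \<Rightarrow> 1 \<le> a \<and> a < b \<and> b \<le> m \<and> L \<subseteq> {a<..<b})"

text \<open>The cover edges (w,v), w below v, of the fence f(a,b,L) in S_m: w has a,b adjacent
  (a immediately before b), v is obtained by swapping them, values of L are left of a,b,
  values of ]a,b[ - L are right of them.\<close>
definition fence_edges :: "nat \<Rightarrow> fence \<Rightarrow> (nat list \<times> nat list) set" where
  "fence_edges m f = (case f of (a,b,L) \<Rightarrow>
     {(w,v). w \<in> perms m \<and> (\<exists>i. Suc i < length w \<and> w!i = a \<and> w!(Suc i) = b \<and>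
        v = w[i := b, Suc i := a] \<and>
        (\<forall>x\<in>L. \<exists>j<i. w!j = x) \<and>
        (\<forall>x\<in>{a<..<b} - L. \<exists>j. Suc i < j \<and> j < length w \<and> w!j = x))})"

definition fences_of :: "nat \<Rightarrow> (nat list \<times> nat list) set \<Rightarrow> fence set" where
  "fences_of m R = {f. is_fence m f \<and> fence_edges m f \<subseteq> R}"

definition forces :: "fence \<Rightarrow> fence \<Rightarrow> bool" where
  "forces f g \<longleftrightarrow> (case f of (a,b,L) \<Rightarrow> case g of (c,d,M) \<Rightarrow>
     a \<le> c \<and> c < d \<and> d \<le> b \<and> (a,b) \<noteq> (c,d) \<and> M = L \<inter> {c<..<d})"

definition fence_downset :: "nat \<Rightarrow> fence set \<Rightarrow> fence set" where
  "fence_downset m G = {f. is_fence m f \<and> (\<exists>g\<in>G. f = g \<or> forces f g)}"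

definition shift_fence :: "nat \<Rightarrow> fence \<Rightarrow> fence" where
  "shift_fence k f = (case f of (a,b,L) \<Rightarrow> (a + k, b + k, (\<lambda>x. x + k) ` L))"

definition unshift_fence :: "nat \<Rightarrow> fence \<Rightarrow> fence" where
  "unshift_fence k f = (case f of (a,b,L) \<Rightarrow> (a - k, b - k, (\<lambda>x. x - k) ` L))"

definition quot :: "nat \<Rightarrow> (nat list \<times> nat list) set \<Rightarrow> nat list set set" where
  "quot m R = perms m // R"

definition quot_le :: "nat list set \<Rightarrow> nat list set \<Rightarrow> bool" where
  "quot_le X Y \<longleftrightarrow> (\<exists>x\<in>X. \<exists>y\<in>Y. weak_le x y)"

definition prod_le :: "('a \<Rightarrow> 'a \<Rightarrow> bool) \<Rightarrow> ('b \<Rightarrow> 'b \<Rightarrow> bool) \<Rightarrow> 'a \<times> 'b \<Rightarrow> 'a \<times> 'b \<Rightarrow> bool" where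
  "prod_le le1 le2 p q \<longleftrightarrow> le1 (fst p) (fst q) \<and> le2 (snd p) (snd q)"

definition order_iso :: "'a set \<Rightarrow> ('a \<Rightarrow> 'a \<Rightarrow> bool) \<Rightarrow> 'b set \<Rightarrow> ('b \<Rightarrow> 'b \<Rightarrow> bool) \<Rightarrow> bool" where
  "order_iso P leP Q leQ \<longleftrightarrow> (\<exists>\<phi>. bij_betw \<phi> P Q \<and>
     (\<forall>x\<in>P. \<forall>y\<in>P. leP x y \<longleftrightarrow> leQ (\<phi> x) (\<phi> y)))"

end

theory Submission
  imports Defs
begin


fun bef :: "'a list \<Rightarrow> 'a \<Rightarrow> 'a \<Rightarrow> bool" where
  "bef [] x y = False"
| "bef (z#w) x y = ((z = x \<and> y \<in> set w) \<or> bef w x y)"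

lemma bef_nth: "(\<exists>i j. i < j \<and> j < length w \<and> w!i = x \<and> w!j = y) \<longleftrightarrow> bef w x y"
proof (induction w)
  case Nil then show ?case by simp
next
  case (Cons z w)
  show ?case
  proof
    assume "\<exists>i j. i < j \<and> j < length (z#w) \<and> (z#w)!i = x \<and> (z#w)!j = y"
    then obtain i j where ij: "i < j" "j < length (z#w)" "(z#w)!i = x" "(z#w)!j = y" by blast
    then obtain j' where j': "j = Suc j'" by (cases j) auto
    show "bef (z#w) x y"
    proof (cases i)
      case 0 then show ?thesis using ij j' by (auto simp: in_set_conv_nth)
    next
      case (Suc i') then show ?thesis using ij j' Cons.IH by auto
    qed
  next
    assume "bef (z#w) x y"
    then consider "z = x" "y \<in> set w" | "bef w x y" by auto
    then show "\<exists>i j. i < j \<and> j < length (z#w) \<and> (z#w)!i = x \<and> (z#w)!j = y"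
    proof cases
      case 1
      then obtain j where "j < length w" "w!j = y" by (auto simp: in_set_conv_nth)
      then show ?thesis using 1 by (intro exI[of _ 0] exI[of _ "Suc j"]) auto
    next
      case 2
      then obtain i j where "i < j" "j < length w" "w!i = x" "w!j = y" using Cons.IH by blast
      then show ?thesis by (intro exI[of _ "Suc i"] exI[of _ "Suc j"]) auto
    qed
  qed
qed

lemma inv_bef: "inversions w = {(a,b). a < b \<and> bef w b a}"
  by (simp only: inversions_def bef_nth)

lemma bef_set: "bef w x y \<Longrightarrow> x \<in> set w \<and> y \<in> set w"
  by (induction w) auto

lemma bef_append: "bef (U@V) x y \<longleftrightarrow> bef U x y \<or> bef V x y \<or> (x \<in> set U \<and> y \<in> set V)"
  by (induction U) auto

lemma bef_filter: "bef (filter P w) x y \<longleftrightarrow> P x \<and> P y \<and> bef w x y"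
  by (induction w) (auto dest: bef_set)

lemma bef_map: "bef (map f w) u v \<longleftrightarrow> (\<exists>x y. u = f x \<and> v = f y \<and> bef w x y)"
  by (induction w) auto

lemma bef_irrefl: "distinct w \<Longrightarrow> \<not> bef w x x"
  by (induction w) (auto dest: bef_set)

lemma bef_asym: "distinct w \<Longrightarrow> bef w x y \<Longrightarrow> \<not> bef w y x"
  by (induction w) (auto dest: bef_set)

lemma bef_trans: "distinct w \<Longrightarrow> bef w x y \<Longrightarrow> bef w y z \<Longrightarrow> bef w x z"
  by (induction w) (auto dest: bef_set)

lemma bef_total: "x \<in> set w \<Longrightarrow> y \<in> set w \<Longrightarrow> x \<noteq> y \<Longrightarrow> bef w x y \<or> bef w y x"
  by (induction w) auto


lemma perms_distinct: "w \<in> perms m \<Longrightarrow> distinct w" and perms_set: "w \<in> perms m \<Longrightarrow> set w = {1..m}"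
  by (auto simp: perms_def)

lemma bef_iff_not: "distinct x \<Longrightarrow> u \<noteq> v \<Longrightarrow> bef x u v \<longleftrightarrow> (u \<in> set x \<and> v \<in> set x \<and> \<not> bef x v u)"
  using bef_asym[of x u v] bef_set[of x u v] bef_total[of u x v] by blast

lemma bef_eq_imp_eq:
  "distinct x \<Longrightarrow> distinct y \<Longrightarrow> set x = set y \<Longrightarrow> (\<forall>u v. bef x u v \<longleftrightarrow> bef y u v) \<Longrightarrow> x = y"
proof (induction x arbitrary: y)
  case Nil then show ?case by simp
next
  case (Cons h x)
  then obtain k y' where y: "y = k # y'" by (cases y) auto
  have hk: "h = k"
  proof (rule ccontr)
    assume "h \<noteq> k"
    then have "h \<in> set y'" using Cons.prems y by auto
    then have "bef y k h" using y by simp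
    then have "bef (h#x) k h" using Cons.prems by blast
    then have "bef x k h" using \<open>h \<noteq> k\<close> by simp
    then show False using Cons.prems(1) bef_set by fastforce
  qed
  have "x = y'"
  proof (rule Cons.IH)
    show "distinct x" using Cons.prems by simp
    show "distinct y'" using Cons.prems y by simp
    show "set x = set y'" using Cons.prems y hk by auto
    show "\<forall>u v. bef x u v \<longleftrightarrow> bef y' u v"
    proof (intro allI)
      fix u v
      have 1: "bef x u v \<longleftrightarrow> bef (h#x) u v \<and> u \<noteq> h" using Cons.prems(1) bef_set by fastforce
      have 2: "bef y' u v \<longleftrightarrow> bef (k#y') u v \<and> u \<noteq> k" using Cons.prems(2) y bef_set by fastforce
      show "bef x u v \<longleftrightarrow> bef y' u v" using 1 2 Cons.prems(4) y hk by auto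
    qed
  qed
  then show ?case using y hk by simp
qed

lemma inv_inj:
  assumes "x \<in> perms m" "y \<in> perms m" "inversions x = inversions y"
  shows "x = y"
proof (rule bef_eq_imp_eq)
  show "distinct x" "distinct y" "set x = set y" using assms by (auto simp: perms_def)
  show "\<forall>u v. bef x u v \<longleftrightarrow> bef y u v"
  proof (intro allI)
    fix u v :: nat
    have key: "bef x u v \<longleftrightarrow> bef y u v" if "u < v" for u v
    proof -
      have "bef x u v \<longleftrightarrow> u \<in> set x \<and> v \<in> set x \<and> \<not> bef x v u"
        using bef_iff_not \<open>distinct x\<close> that by (metis less_irrefl)
      moreover have "bef y u v \<longleftrightarrow> u \<in> set y \<and> v \<in> set y \<and> \<not> bef y v u"
        using bef_iff_not \<open>distinct y\<close> that by (metis less_irrefl)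
      moreover have "bef x v u \<longleftrightarrow> bef y v u" using assms(3) that by (auto simp: inv_bef)
      ultimately show ?thesis using \<open>set x = set y\<close> by auto
    qed
    consider "u < v" | "v < u" | "u = v" by (cases u v rule: linorder_cases) auto
    then show "bef x u v \<longleftrightarrow> bef y u v"
    proof cases
      case 1 then show ?thesis using key by blast
    next
      case 2 then show ?thesis using assms(3) by (auto simp: inv_bef)
    next
      case 3 then show ?thesis using bef_irrefl[of x u] bef_irrefl[of y u] \<open>distinct x\<close> \<open>distinct y\<close> by auto
    qed
  qed
qed

lemma inv_trans: "distinct u \<Longrightarrow> (a,b) \<in> inversions u \<Longrightarrow> (b,c) \<in> inversions u \<Longrightarrow> (a,c) \<in> inversions u"
  by (auto simp: inv_bef intro: bef_trans)

lemma inv_cotrans: "distinct u \<Longrightarrow> b \<in> set u \<Longrightarrow> a < b \<Longrightarrow> b < c \<Longrightarrow> (a,c) \<in> inversions u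
   \<Longrightarrow> (a,b) \<in> inversions u \<or> (b,c) \<in> inversions u"
  apply (auto simp: inv_bef)
  by (metis bef_set bef_total bef_trans less_irrefl)

lemma bef_swap:
  assumes "distinct (X@[p,q]@Y)"
  shows "bef (X@[q,p]@Y) x y \<longleftrightarrow> (bef (X@[p,q]@Y) x y \<and> \<not>(x = p \<and> y = q)) \<or> (x = q \<and> y = p)"
  using assms bef_set[of X x y] bef_set[of Y x y] by (auto simp: bef_append)

lemma inv_swap_up:
  assumes "distinct (X@[p,q]@Y)" "p < q"
  shows "inversions (X@[q,p]@Y) = insert (p,q) (inversions (X@[p,q]@Y))"
    and "(p,q) \<notin> inversions (X@[p,q]@Y)"
proof -
  show "inversions (X@[q,p]@Y) = insert (p,q) (inversions (X@[p,q]@Y))"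
    using bef_swap[OF assms(1)] assms(2) by (auto simp: inv_bef)
  have "bef (X@[p,q]@Y) p q" by (simp add: bef_append)
  then have "\<not> bef (X@[p,q]@Y) q p" using bef_asym[OF assms(1)] by blast
  then show "(p,q) \<notin> inversions (X@[p,q]@Y)" by (auto simp: inv_bef)
qed



lemma fence_edges_iff:
  "(w,v) \<in> fence_edges m (a,b,L) \<longleftrightarrow>
   (\<exists>U V. w = U@[a,b]@V \<and> v = U@[b,a]@V \<and> w \<in> perms m \<and> L \<subseteq> set U \<and> {a<..<b} - L \<subseteq> set V)"
proof
  assume "(w,v) \<in> fence_edges m (a,b,L)"
  then obtain i where w: "w \<in> perms m" and i: "Suc i < length w" "w!i = a" "w!(Suc i) = b"
    "v = w[i := b, Suc i := a]" "\<forall>x\<in>L. \<exists>j<i. w!j = x"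
    "\<forall>x\<in>{a<..<b} - L. \<exists>j. Suc i < j \<and> j < length w \<and> w!j = x"
    unfolding fence_edges_def by auto
  define U where "U = take i w"
  define V where "V = drop (Suc (Suc i)) w"
  have wd: "w = U@[a,b]@V"
  proof -
    have "w = take i w @ w!i # drop (Suc i) w" using i(1) by (simp add: id_take_nth_drop)
    moreover have "drop (Suc i) w = w!(Suc i) # drop (Suc (Suc i)) w" using i(1)
      by (simp add: Cons_nth_drop_Suc)
    ultimately show ?thesis using i unfolding U_def V_def by simp
  qed
  have lU: "length U = i" using i(1) unfolding U_def by simp
  have vd: "v = U@[b,a]@V" using i(4) wd lU by (simp add: list_update_append)
  have "L \<subseteq> set U"
  proof
    fix x assume "x \<in> L"
    then obtain j where "j < i" "w!j = x" using i(5) by blast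
    then show "x \<in> set U" unfolding U_def using i(1) by (auto simp: in_set_conv_nth)
  qed
  moreover have "{a<..<b} - L \<subseteq> set V"
  proof
    fix x assume "x \<in> {a<..<b} - L"
    then obtain j where j: "Suc i < j" "j < length w" "w!j = x" using i(6) by blast
    obtain k where k: "j = Suc (Suc i) + k" using j(1) less_iff_Suc_add by auto
    have "V ! k = x" "k < length V" unfolding V_def using j k by (auto simp: nth_drop)
    then show "x \<in> set V" by (metis nth_mem)
  qed
  ultimately show "\<exists>U V. w = U@[a,b]@V \<and> v = U@[b,a]@V \<and> w \<in> perms m \<and> L \<subseteq> set U \<and> {a<..<b} - L \<subseteq> set V"
    using wd vd w by blast
next
  assume "\<exists>U V. w = U@[a,b]@V \<and> v = U@[b,a]@V \<and> w \<in> perms m \<and> L \<subseteq> set U \<and> {a<..<b} - L \<subseteq> set V"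
  then obtain U V where d: "w = U@[a,b]@V" "v = U@[b,a]@V" "w \<in> perms m" "L \<subseteq> set U" "{a<..<b} - L \<subseteq> set V"
    by blast
  define i where "i = length U"
  have "Suc i < length w" "w!i = a" "w!(Suc i) = b" "v = w[i := b, Suc i := a]"
    using d unfolding i_def by (auto simp: nth_append list_update_append)
  moreover have "\<forall>x\<in>L. \<exists>j<i. w!j = x"
  proof
    fix x assume "x \<in> L"
    then have "x \<in> set U" using d(4) by blast
    then obtain j where "j < length U" "U!j = x" by (auto simp: in_set_conv_nth)
    then show "\<exists>j<i. w!j = x" using d(1) unfolding i_def by (auto simp: nth_append)
  qed
  moreover have "\<forall>x\<in>{a<..<b} - L. \<exists>j. Suc i < j \<and> j < length w \<and> w!j = x"
  proof
    fix x assume "x \<in> {a<..<b} - L"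
    then have "x \<in> set V" using d(5) by blast
    then obtain j where "j < length V" "V!j = x" by (auto simp: in_set_conv_nth)
    then show "\<exists>j. Suc i < j \<and> j < length w \<and> w!j = x" using d(1) unfolding i_def
      by (intro exI[of _ "Suc (Suc (length U)) + j"]) (auto simp: nth_append)
  qed
  ultimately show "(w,v) \<in> fence_edges m (a,b,L)" unfolding fence_edges_def using d(3) by auto
qed

lemma perms_same:
  "w \<in> perms m \<Longrightarrow> distinct w' \<Longrightarrow> set w' = set w \<Longrightarrow> w' \<in> perms m"
  by (auto simp: perms_def)

lemma perms_swap: "X@[p,q]@Y \<in> perms m \<Longrightarrow> X@[q,p]@Y \<in> perms m"
  by (auto simp: perms_def)

lemma edge_in_fence:
  assumes "(a,b,L) \<in> fences_of m R" "U@[a,b]@V \<in> perms m" "L = {x\<in>{a<..<b}. x \<in> set U}"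
  shows "(U@[a,b]@V, U@[b,a]@V) \<in> R"
proof -
  have "{a<..<b} - L \<subseteq> set V"
  proof
    fix x assume x: "x \<in> {a<..<b} - L"
    have "a \<ge> 1" "b \<le> m" using assms(1) by (auto simp: fences_of_def is_fence_def)
    then have "x \<in> set (U@[a,b]@V)" using x assms(2) by (auto simp: perms_def)
    then show "x \<in> set V" using x assms(3) by auto
  qed
  then have "(U@[a,b]@V, U@[b,a]@V) \<in> fence_edges m (a,b,L)"
    using assms fence_edges_iff by auto
  then show ?thesis using assms(1) by (auto simp: fences_of_def)
qed

lemma fence_from_edge:
  assumes "\<And>U' V'. U'@[a,b]@V' \<in> perms m \<Longrightarrow> L \<subseteq> set U' \<Longrightarrow> {a<..<b} - L \<subseteq> set V'
           \<Longrightarrow> (U'@[a,b]@V', U'@[b,a]@V') \<in> R"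
    and "is_fence m (a,b,L)"
  shows "(a,b,L) \<in> fences_of m R"
  using assms unfolding fences_of_def by (auto simp: fence_edges_iff)

lemma cong_equiv: "lattice_cong m R \<Longrightarrow> equiv (perms m) R"
  by (simp add: lattice_cong_def)

lemma cong_refl: "lattice_cong m R \<Longrightarrow> x \<in> perms m \<Longrightarrow> (x,x) \<in> R"
  using cong_equiv equiv_def refl_onD by metis

lemma cong_sym: "lattice_cong m R \<Longrightarrow> (x,y) \<in> R \<Longrightarrow> (y,x) \<in> R"
  using cong_equiv equiv_def symD by metis

lemma cong_trans: "lattice_cong m R \<Longrightarrow> (x,y) \<in> R \<Longrightarrow> (y,z) \<in> R \<Longrightarrow> (x,z) \<in> R"
  using cong_equiv equiv_def transD by metis

lemma cong_perms: "lattice_cong m R \<Longrightarrow> (x,y) \<in> R \<Longrightarrow> x \<in> perms m \<and> y \<in> perms m"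
  using cong_equiv equiv_def refl_on_def by blast

lemma cong_join: "lattice_cong m R \<Longrightarrow> (x,y) \<in> R \<Longrightarrow> z \<in> perms m \<Longrightarrow> is_join m x z j \<Longrightarrow> is_join m y z j'
   \<Longrightarrow> (j,j') \<in> R"
  unfolding lattice_cong_def by blast

lemma cong_meet: "lattice_cong m R \<Longrightarrow> (x,y) \<in> R \<Longrightarrow> z \<in> perms m \<Longrightarrow> is_meet m x z j \<Longrightarrow> is_meet m y z j'
   \<Longrightarrow> (j,j') \<in> R"
  unfolding lattice_cong_def by blast

lemma join_of: "z \<in> perms m \<Longrightarrow> inversions z = inversions x \<union> inversions y \<Longrightarrow> is_join m x y z"
  by (auto simp: is_join_def weak_le_def)

lemma meet_of: "z \<in> perms m \<Longrightarrow> inversions z = inversions x \<inter> inversions y \<Longrightarrow> is_meet m x y z"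
  by (auto simp: is_meet_def weak_le_def)

lemma join_le: "y \<in> perms m \<Longrightarrow> weak_le x y \<Longrightarrow> is_join m x y y"
  by (auto simp: is_join_def weak_le_def)

lemma join_le': "x \<in> perms m \<Longrightarrow> weak_le y x \<Longrightarrow> is_join m x y x"
  by (auto simp: is_join_def weak_le_def)

lemma meet_le: "x \<in> perms m \<Longrightarrow> weak_le x y \<Longrightarrow> is_meet m x y x"
  by (auto simp: is_meet_def weak_le_def)

lemma meet_le': "y \<in> perms m \<Longrightarrow> weak_le y x \<Longrightarrow> is_meet m x y y"
  by (auto simp: is_meet_def weak_le_def)

lemma join_comm: "is_join m x y z \<Longrightarrow> is_join m y x z"
  by (auto simp: is_join_def)

lemma meet_comm: "is_meet m x y z \<Longrightarrow> is_meet m y x z"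
  by (auto simp: is_meet_def)

lemma convex:
  assumes "lattice_cong m R" "(x,z) \<in> R" "y \<in> perms m" "weak_le x y" "weak_le y z"
  shows "(x,y) \<in> R" "(y,z) \<in> R"
proof -
  have xz: "x \<in> perms m" "z \<in> perms m" using cong_perms[OF assms(1,2)] by auto
  have "is_join m x y y" using join_le assms by blast
  moreover have "is_join m z y z" using join_le' assms xz by blast
  ultimately show yz: "(y,z) \<in> R" using cong_join[OF assms(1,2,3)] by blast
  show "(x,y) \<in> R" using cong_trans[OF assms(1,2) cong_sym[OF assms(1) yz]] .
qed

lemma square:
  assumes R: "lattice_cong m R" and perms: "w \<in> perms m" "v \<in> perms m" "w' \<in> perms m" "v' \<in> perms m"
    and inv: "inversions v = insert e (inversions w)" "inversions w' = insert e' (inversions w)"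
      "inversions v' = insert e (insert e' (inversions w))"
    and ne: "e \<notin> inversions w" "e' \<notin> inversions w" "e \<noteq> e'"
  shows "(w,v) \<in> R \<longleftrightarrow> (w',v') \<in> R"
proof
  assume "(w,v) \<in> R"
  moreover have "is_join m w w' w'" by (rule join_le) (use perms inv in \<open>auto simp: weak_le_def\<close>)
  moreover have "is_join m v w' v'" by (rule join_of) (use perms inv in auto)
  ultimately show "(w',v') \<in> R" using cong_join[OF R] perms by blast
next
  assume "(w',v') \<in> R"
  moreover have "is_meet m w' v w" using meet_of perms inv ne by auto
  moreover have "is_meet m v' v v" by (rule meet_le') (use perms inv in \<open>auto simp: weak_le_def\<close>)
  ultimately show "(w,v) \<in> R" using cong_meet[OF R] perms by blast
qed

subsection \<open>Hexagon\<close>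

locale hex =
  fixes m :: nat and X Y :: "nat list" and p q r :: nat
  assumes perm: "X@[p,q,r]@Y \<in> perms m" and pq: "p < q" and qr: "q < r"
begin

abbreviation "e123 \<equiv> X@[p,q,r]@Y"
abbreviation "e213 \<equiv> X@[q,p,r]@Y"
abbreviation "e231 \<equiv> X@[q,r,p]@Y"
abbreviation "e321 \<equiv> X@[r,q,p]@Y"
abbreviation "e132 \<equiv> X@[p,r,q]@Y"
abbreviation "e312 \<equiv> X@[r,p,q]@Y"

abbreviation "K \<equiv> inversions e123"

lemma dist: "distinct e123" using perm by (simp add: perms_def)

lemma ps: "e213 \<in> perms m" "e231 \<in> perms m" "e321 \<in> perms m" "e132 \<in> perms m" "e312 \<in> perms m"
  using perm by (auto simp: perms_def)

lemma inv213: "inversions e213 = insert (p,q) K" and npq: "(p,q) \<notin> K"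
  using inv_swap_up[of X p q "r#Y"] dist pq by auto

lemma inv132: "inversions e132 = insert (q,r) K" and nqr: "(q,r) \<notin> K"
  using inv_swap_up[of "X@[p]" q r Y] dist qr by auto

lemma inv231: "inversions e231 = insert (p,r) (insert (p,q) K)" and npr: "(p,r) \<notin> K"
proof -
  have d: "distinct ((X@[q])@[p,r]@Y)" using dist by auto
  have "inversions ((X@[q])@[r,p]@Y) = insert (p,r) (inversions ((X@[q])@[p,r]@Y))"
    "(p,r) \<notin> inversions ((X@[q])@[p,r]@Y)"
    using inv_swap_up[OF d] pq qr by auto
  then show "inversions e231 = insert (p,r) (insert (p,q) K)" "(p,r) \<notin> K"
    using inv213 by auto
qed

lemma inv312: "inversions e312 = insert (p,r) (insert (q,r) K)"
proof -
  have d: "distinct (X@[p,r]@(q#Y))" using dist by auto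
  have "inversions (X@[r,p]@(q#Y)) = insert (p,r) (inversions (X@[p,r]@(q#Y)))"
    using inv_swap_up[OF d] pq qr by auto
  then show ?thesis using inv132 by auto
qed

lemma inv321: "inversions e321 = insert (q,r) (insert (p,r) (insert (p,q) K))"
proof -
  have d: "distinct (X@[q,r]@(p#Y))" using dist by auto
  have "inversions (X@[r,q]@(p#Y)) = insert (q,r) (inversions (X@[q,r]@(p#Y)))"
    using inv_swap_up[OF d] pq qr by auto
  then show ?thesis using inv231 by auto
qed

lemmas invs = inv213 inv132 inv231 inv312 inv321

lemma J1: "is_join m e213 e132 e321"
  unfolding is_join_def weak_le_def
proof (intro conjI ballI impI)
  show "e321 \<in> perms m" using ps by auto
  show "inversions e213 \<subseteq> inversions e321" "inversions e132 \<subseteq> inversions e321" using invs by auto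
  fix u assume u: "u \<in> perms m" "inversions e213 \<subseteq> inversions u \<and> inversions e132 \<subseteq> inversions u"
  then have "(p,q) \<in> inversions u" "(q,r) \<in> inversions u" using invs by auto
  then have "(p,r) \<in> inversions u" using inv_trans u(1) by (auto simp: perms_def)
  then show "inversions e321 \<subseteq> inversions u" using u invs by auto
qed

lemma M1: "is_meet m e312 e231 e123"
  unfolding is_meet_def weak_le_def
proof (intro conjI ballI impI)
  show "e123 \<in> perms m" using perm by auto
  show "K \<subseteq> inversions e312" "K \<subseteq> inversions e231" using invs by auto
  fix u assume u: "u \<in> perms m" "inversions u \<subseteq> inversions e312 \<and> inversions u \<subseteq> inversions e231"
  have ne: "(p,q) \<noteq> (q,r)" "(p,r) \<noteq> (q,r)" "(p,r) \<noteq> (p,q)" using pq qr by auto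
  have sub: "inversions u \<subseteq> insert (p,r) K" using u invs ne npq nqr npr by auto
  have "(p,r) \<notin> inversions u"
  proof
    assume h: "(p,r) \<in> inversions u"
    have "q \<in> set u" using u(1) perm by (auto simp: perms_def)
    then have "(p,q) \<in> inversions u \<or> (q,r) \<in> inversions u"
      using inv_cotrans[OF _ _ pq qr h] u(1) by (auto simp: perms_def)
    then show False using sub ne npq nqr by auto
  qed
  then show "inversions u \<subseteq> K" using sub by auto
qed

lemma M2: "is_meet m e231 e132 e123"
  apply (rule meet_of) using perm invs npq nqr npr pq qr by auto

lemma M3: "is_meet m e312 e213 e123"
  apply (rule meet_of) using perm invs npq nqr npr pq qr by auto

lemma le: "weak_le e123 e213" "weak_le e213 e231" "weak_le e231 e321" "weak_le e123 e132"
  "weak_le e132 e312" "weak_le e312 e321" "weak_le e123 e231" "weak_le e123 e312"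
  "weak_le e213 e321" "weak_le e132 e321"
  unfolding weak_le_def using invs by auto

context fixes R assumes R: "lattice_cong m R"
begin

lemma HX1:
  assumes "(e123, e213) \<in> R"
  shows "(e132, e312) \<in> R" "(e312, e321) \<in> R" "(e213, e231) \<in> R"
proof -
  have "(e132, e321) \<in> R"
    using cong_join[OF R assms ps(4) join_le[OF ps(4) le(4)] J1] .
  then show a: "(e132, e312) \<in> R" "(e312, e321) \<in> R" using convex[OF R _ ps(5)] le by auto
  have "(e123, e231) \<in> R"
    using cong_meet[OF R a(2) ps(2) M1 meet_le'[OF ps(2) le(3)]] .
  then show "(e213, e231) \<in> R" using convex[OF R _ ps(1)] le by auto
qed

lemma HX2:
  assumes "(e123, e132) \<in> R"
  shows "(e213, e231) \<in> R" "(e231, e321) \<in> R" "(e132, e312) \<in> R"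
proof -
  have "(e213, e321) \<in> R"
    using cong_join[OF R assms ps(1) join_le[OF ps(1) le(1)] join_comm[OF J1]] .
  then show a: "(e213, e231) \<in> R" "(e231, e321) \<in> R" using convex[OF R _ ps(2)] le by auto
  have "(e123, e312) \<in> R"
    using cong_meet[OF R a(2) ps(5) meet_comm[OF M1] meet_le'[OF ps(5) ]] le unfolding weak_le_def
    using invs by auto
  then show "(e132, e312) \<in> R" using convex[OF R _ ps(4)] le by auto
qed

lemma HX3: "(e231, e321) \<in> R \<Longrightarrow> (e123, e132) \<in> R"
  using cong_meet[OF R _ ps(4) M2 meet_le'[OF ps(4) le(10)]] by blast

lemma HX4: "(e312, e321) \<in> R \<Longrightarrow> (e123, e213) \<in> R"
  using cong_meet[OF R _ ps(1) M3 meet_le'[OF ps(1) le(9)]] by blast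

end
end



lemma bubble:
  assumes cl: "\<And>U1 c d U2. Sw c d \<Longrightarrow> Q (U1@[c,d]@U2) \<Longrightarrow> Q (U1@[d,c]@U2)"
  shows "\<forall>z\<in>set A. Sw z x \<Longrightarrow> Q (A@x#B) \<Longrightarrow> Q (x#A@B)"
proof (induction A arbitrary: B rule: rev_induct)
  case Nil then show ?case by simp
next
  case (snoc z A)
  have "Q (A@[z,x]@B)" using snoc.prems by simp
  then have "Q (A@[x,z]@B)" using cl snoc.prems by simp
  then have "Q (A@x#(z#B))" by simp
  then have "Q (x#A@z#B)" using snoc.IH snoc.prems by simp
  then show ?case by simp
qed

lemma reorder:
  assumes "\<And>U1 c d U2. Sw c d \<Longrightarrow> Q (U1@[c,d]@U2) \<Longrightarrow> Q (U1@[d,c]@U2)"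
    and "Q w" "distinct w" "distinct w'" "set w' = set w"
    and "\<And>x y. bef w x y \<Longrightarrow> bef w' y x \<Longrightarrow> Sw x y"
  shows "Q w'"
  using assms
proof (induction w' arbitrary: w Q)
  case Nil then show ?case by simp
next
  case (Cons x w'')
  have "x \<in> set w" using Cons.prems(5) by auto
  then obtain A B where w: "w = A@x#B" by (meson split_list)
  have sw: "\<forall>z\<in>set A. Sw z x"
  proof
    fix z assume z: "z \<in> set A"
    have "bef w z x" using w z by (simp add: bef_append)
    moreover have "z \<noteq> x" using Cons.prems(3) w z by auto
    then have "z \<in> set w''" using Cons.prems(5) w z by auto
    then have "bef (x#w'') x z" by simp
    ultimately show "Sw z x" using Cons.prems(6) by blast
  qed
  have q: "Q (x#A@B)" using bubble[of Sw Q, OF Cons.prems(1) sw] Cons.prems(2) w by blast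
  let ?Q = "\<lambda>Z. Q (x#Z)"
  show ?case
  proof (rule Cons.IH[of ?Q "A@B"])
    show "\<And>U1 c d U2. Sw c d \<Longrightarrow> ?Q (U1@[c,d]@U2) \<Longrightarrow> ?Q (U1@[d,c]@U2)"
      using Cons.prems(1)[of _ _ "x#_"] by simp
    show "?Q (A@B)" using q .
    show "distinct (A@B)" using Cons.prems(3) w by simp
    show "distinct w''" using Cons.prems(4) by simp
    show "set w'' = set (A@B)" using Cons.prems(3-5) w by auto
    fix u v assume "bef (A@B) u v" "bef w'' v u"
    then have "bef w u v" "bef (x#w'') v u" using w by (auto simp: bef_append)
    then show "Sw u v" using Cons.prems(6) by blast
  qed
qed

subsection \<open>Uniformity of fences\<close>

locale unif =
  fixes m :: nat and R and a b :: nat and L :: "nat set"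
  assumes R: "lattice_cong m R" and ab: "a < b" and Lab: "L \<subseteq> {a<..<b}"
begin

definition good where "good U V \<longleftrightarrow> (U@[a,b]@V \<in> perms m \<longrightarrow> (U@[a,b]@V, U@[b,a]@V) \<in> R)"
definition cfg where "cfg U V \<longleftrightarrow> U@[a,b]@V \<in> perms m \<and> L \<subseteq> set U \<and> {a<..<b} - L \<subseteq> set V"

lemma sqU_lt:
  assumes "c < d" "U1@[c,d]@U2@[a,b]@V \<in> perms m"
  shows "(U1@[c,d]@U2@[a,b]@V, U1@[c,d]@U2@[b,a]@V) \<in> R \<longleftrightarrow>
         (U1@[d,c]@U2@[a,b]@V, U1@[d,c]@U2@[b,a]@V) \<in> R"
proof (rule square[OF R])
  have d: "distinct (U1@[c,d]@U2@[a,b]@V)" using assms by (simp add: perms_def)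
  show "U1@[c,d]@U2@[a,b]@V \<in> perms m" "U1@[c,d]@U2@[b,a]@V \<in> perms m"
    "U1@[d,c]@U2@[a,b]@V \<in> perms m" "U1@[d,c]@U2@[b,a]@V \<in> perms m" using assms(2) by (auto simp: perms_def)
  have d1: "distinct ((U1@[c,d]@U2)@[a,b]@V)" using d by simp
  have d2: "distinct (U1@[c,d]@(U2@[a,b]@V))" using d by simp
  have d3: "distinct ((U1@[d,c]@U2)@[a,b]@V)" using d by auto
  note i1 = inv_swap_up[OF d1 ab] and i2 = inv_swap_up[OF d2 assms(1)] and i3 = inv_swap_up[OF d3 ab]
  show "inversions (U1@[c,d]@U2@[b,a]@V) = insert (a,b) (inversions (U1@[c,d]@U2@[a,b]@V))"
    using i1 by simp
  show "inversions (U1@[d,c]@U2@[a,b]@V) = insert (c,d) (inversions (U1@[c,d]@U2@[a,b]@V))"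
    using i2 by simp
  show "inversions (U1@[d,c]@U2@[b,a]@V) = insert (a,b) (insert (c,d) (inversions (U1@[c,d]@U2@[a,b]@V)))"
    using i2 i3 by simp
  show "(a,b) \<notin> inversions (U1@[c,d]@U2@[a,b]@V)" using i1 by simp
  show "(c,d) \<notin> inversions (U1@[c,d]@U2@[a,b]@V)" using i2 by simp
  show "(a,b) \<noteq> (c,d)" using d by auto
qed

lemma sqV_lt:
  assumes "c < d" "U@[a,b]@V1@[c,d]@V2 \<in> perms m"
  shows "(U@[a,b]@V1@[c,d]@V2, U@[b,a]@V1@[c,d]@V2) \<in> R \<longleftrightarrow>
         (U@[a,b]@V1@[d,c]@V2, U@[b,a]@V1@[d,c]@V2) \<in> R"
proof (rule square[OF R])
  have d: "distinct (U@[a,b]@V1@[c,d]@V2)" using assms by (simp add: perms_def)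
  show "U@[a,b]@V1@[c,d]@V2 \<in> perms m" "U@[b,a]@V1@[c,d]@V2 \<in> perms m"
    "U@[a,b]@V1@[d,c]@V2 \<in> perms m" "U@[b,a]@V1@[d,c]@V2 \<in> perms m" using assms(2) by (auto simp: perms_def)
  have d1: "distinct (U@[a,b]@(V1@[c,d]@V2))" using d by simp
  have d2: "distinct ((U@[a,b]@V1)@[c,d]@V2)" using d by simp
  have d3: "distinct (U@[a,b]@(V1@[d,c]@V2))" using d by auto
  note i1 = inv_swap_up[OF d1 ab] and i2 = inv_swap_up[OF d2 assms(1)] and i3 = inv_swap_up[OF d3 ab]
  show "inversions (U@[b,a]@V1@[c,d]@V2) = insert (a,b) (inversions (U@[a,b]@V1@[c,d]@V2))"
    using i1 by simp
  show "inversions (U@[a,b]@V1@[d,c]@V2) = insert (c,d) (inversions (U@[a,b]@V1@[c,d]@V2))"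
    using i2 by simp
  show "inversions (U@[b,a]@V1@[d,c]@V2) = insert (a,b) (insert (c,d) (inversions (U@[a,b]@V1@[c,d]@V2)))"
    using i2 i3 by simp
  show "(a,b) \<notin> inversions (U@[a,b]@V1@[c,d]@V2)" using i1 by simp
  show "(c,d) \<notin> inversions (U@[a,b]@V1@[c,d]@V2)" using i2 by simp
  show "(a,b) \<noteq> (c,d)" using d by auto
qed

lemma goodU: "good (U1@[c,d]@U2) V \<Longrightarrow> good (U1@[d,c]@U2) V"
proof -
  assume g: "good (U1@[c,d]@U2) V"
  show "good (U1@[d,c]@U2) V" unfolding good_def
  proof
    assume p: "(U1@[d,c]@U2)@[a,b]@V \<in> perms m"
    then have p': "U1@[c,d]@U2@[a,b]@V \<in> perms m" by (auto simp: perms_def)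
    then have e: "(U1@[c,d]@U2@[a,b]@V, U1@[c,d]@U2@[b,a]@V) \<in> R" using g by (simp add: good_def)
    have "c \<noteq> d" using p by (auto simp: perms_def)
    then consider "c < d" | "d < c" by arith
    then show "((U1@[d,c]@U2)@[a,b]@V, (U1@[d,c]@U2)@[b,a]@V) \<in> R"
    proof cases
      case 1 then show ?thesis using sqU_lt[OF 1 p'] e by simp
    next
      case 2 then show ?thesis using sqU_lt[OF 2, of U1 U2 V] p e by simp
    qed
  qed
qed

lemma goodV: "good U (V1@[c,d]@V2) \<Longrightarrow> good U (V1@[d,c]@V2)"
proof -
  assume g: "good U (V1@[c,d]@V2)"
  show "good U (V1@[d,c]@V2)" unfolding good_def
  proof
    assume p: "U@[a,b]@V1@[d,c]@V2 \<in> perms m"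
    then have p': "U@[a,b]@V1@[c,d]@V2 \<in> perms m" by (auto simp: perms_def)
    then have e: "(U@[a,b]@V1@[c,d]@V2, U@[b,a]@V1@[c,d]@V2) \<in> R" using g by (simp add: good_def)
    have "c \<noteq> d" using p by (auto simp: perms_def)
    then consider "c < d" | "d < c" by arith
    then show "(U@[a,b]@V1@[d,c]@V2, U@[b,a]@V1@[d,c]@V2) \<in> R"
    proof cases
      case 1 then show ?thesis using sqV_lt[OF 1 p'] e by simp
    next
      case 2 then show ?thesis using sqV_lt[OF 2, of U V1 V2] p e by simp
    qed
  qed
qed

lemma good_hex:
  assumes p: "X@[c,a,b]@Y \<in> perms m" and c: "c < a \<or> b < c"
  shows "good (X@[c]) Y \<longleftrightarrow> good X (c#Y)"
proof -
  have p2: "X@[a,b,c]@Y \<in> perms m" using p by (auto simp: perms_def)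
  consider "c < a" | "b < c" using c by blast
  then show ?thesis
  proof cases
    case 1
    interpret hex m X Y c a b using p 1 ab by unfold_locales auto
    show ?thesis unfolding good_def using p p2 HX2[OF R] HX3[OF R] by auto
  next
    case 2
    interpret hex m X Y a b c using p2 2 ab by unfold_locales auto
    show ?thesis unfolding good_def using p p2 HX1[OF R] HX4[OF R] by auto
  qed
qed

lemma good_move:
  assumes "N@T@[a,b]@V \<in> perms m" "\<forall>c\<in>set T. c < a \<or> b < c"
  shows "good (N@T) V \<longleftrightarrow> good N (T@V)"
  using assms
proof (induction T arbitrary: V rule: rev_induct)
  case Nil then show ?case by simp
next
  case (snoc c T)
  have "good (N@T@[c]) V \<longleftrightarrow> good (N@T) (c#V)"
    using good_hex[of "N@T" c V] snoc.prems by simp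
  also have "\<dots> \<longleftrightarrow> good N (T@c#V)"
  proof -
    have "N@T@[a,b]@(c#V) \<in> perms m" using snoc.prems(1) by (auto simp: perms_def)
    then show ?thesis using snoc.IH[of "c#V"] snoc.prems by simp
  qed
  finally show ?case by simp
qed

lemma good_reorderU:
  assumes "good U V" "distinct U" "distinct U'" "set U' = set U"
  shows "good U' V"
  by (rule reorder[of "\<lambda>_ _. True" "\<lambda>Z. good Z V", OF _ assms(1-4)]) (auto intro: goodU[simplified])

lemma good_reorderV:
  assumes "good U V" "distinct V" "distinct V'" "set V' = set V"
  shows "good U V'"
  by (rule reorder[of "\<lambda>_ _. True" "\<lambda>Z. good U Z", OF _ assms(1-4)]) (auto intro: goodV[simplified])

lemma normalize:
  assumes "cfg U V"
  shows "\<exists>N M. set N = L \<and> cfg N M \<and> (good U V \<longleftrightarrow> good N M)"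
proof -
  have p: "U@[a,b]@V \<in> perms m" and LU: "L \<subseteq> set U" and LV: "{a<..<b} - L \<subseteq> set V"
    using assms by (auto simp: cfg_def)
  have d: "distinct (U@[a,b]@V)" using p by (simp add: perms_def)
  define N where "N = filter (\<lambda>x. x \<in> L) U"
  define T where "T = filter (\<lambda>x. x \<notin> L) U"
  have sN: "set N = L" using LU unfolding N_def by auto
  have sU: "set (N@T) = set U" unfolding N_def T_def by auto
  have dU: "distinct (N@T)" using d unfolding N_def T_def by auto
  have p2: "N@T@[a,b]@V \<in> perms m" using p d dU sU by (auto simp: perms_def)
  have g1: "good U V \<longleftrightarrow> good (N@T) V"
    using good_reorderU[of U V "N@T"] good_reorderU[of "N@T" V U] d dU sU by auto
  have Tc: "\<forall>c\<in>set T. c < a \<or> b < c"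
  proof
    fix c assume c: "c \<in> set T"
    then have "c \<in> set U" "c \<notin> L" unfolding T_def by auto
    moreover have "c \<noteq> a" "c \<noteq> b" "c \<notin> set V" using d \<open>c \<in> set U\<close> by auto
    ultimately show "c < a \<or> b < c"
    proof -
      assume h: "c \<in> set U" "c \<notin> L" "c \<noteq> a" "c \<noteq> b" "c \<notin> set V"
      show ?thesis
      proof (rule ccontr)
        assume "\<not> (c < a \<or> b < c)"
        then have "c \<in> {a<..<b} - L" using h by auto
        then show False using LV h by blast
      qed
    qed
  qed
  have g2: "good (N@T) V \<longleftrightarrow> good N (T@V)" using good_move[OF _ Tc] p2 by simp
  have "N@[a,b]@T@V \<in> perms m" using p2 by (auto simp: perms_def)
  then have "cfg N (T@V)" unfolding cfg_def using sN LV by auto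
  then show ?thesis using sN g1 g2 by blast
qed

lemma normal_eq:
  assumes "cfg N M" "cfg N' M'" "set N = L" "set N' = L"
  shows "good N M \<longleftrightarrow> good N' M'"
proof -
  have d: "distinct (N@[a,b]@M)" "distinct (N'@[a,b]@M')" using assms by (auto simp: cfg_def perms_def)
  have s: "set (N@[a,b]@M) = set (N'@[a,b]@M')" using assms by (auto simp: cfg_def perms_def)
  have sM: "set M = set M'"
  proof -
    have "set M = set (N@[a,b]@M) - L - {a,b}" using d assms(3) by auto
    also have "\<dots> = set (N'@[a,b]@M') - L - {a,b}" using s by simp
    also have "\<dots> = set M'" using d assms(4) by auto
    finally show ?thesis .
  qed
  have "good N M \<longleftrightarrow> good N' M"
    using good_reorderU[of N M N'] good_reorderU[of N' M N] d assms(3,4) by auto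
  also have "\<dots> \<longleftrightarrow> good N' M'"
    using good_reorderV[of N' M M'] good_reorderV[of N' M' M] d sM by auto
  finally show ?thesis .
qed

lemma cfg_good_eq: "cfg U V \<Longrightarrow> cfg U' V' \<Longrightarrow> good U V \<longleftrightarrow> good U' V'"
  using normalize normal_eq by metis

end

lemma uniform:
  assumes R: "lattice_cong m R" and p: "U@[a,b]@V \<in> perms m" and ab: "a < b"
    and e: "(U@[a,b]@V, U@[b,a]@V) \<in> R"
  shows "(a,b,{x\<in>{a<..<b}. x \<in> set U}) \<in> fences_of m R"
proof -
  define L where "L = {x\<in>{a<..<b}. x \<in> set U}"
  interpret unif m R a b L using R ab by unfold_locales (auto simp: L_def)
  have ab1: "1 \<le> a" "b \<le> m" using p by (auto simp: perms_def)
  have c0: "cfg U V" unfolding cfg_def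
  proof (intro conjI)
    show "U@[a,b]@V \<in> perms m" using p .
    show "L \<subseteq> set U" unfolding L_def by auto
    show "{a<..<b} - L \<subseteq> set V"
    proof
      fix x assume x: "x \<in> {a<..<b} - L"
      then have "x \<in> set (U@[a,b]@V)" using p ab1 by (auto simp: perms_def)
      then show "x \<in> set V" using x unfolding L_def by auto
    qed
  qed
  have g0: "good U V" using e by (simp add: good_def)
  show ?thesis unfolding L_def[symmetric]
  proof (rule fence_from_edge)
    fix U' V' assume "U'@[a,b]@V' \<in> perms m" "L \<subseteq> set U'" "{a<..<b} - L \<subseteq> set V'"
    then have "cfg U' V'" by (simp add: cfg_def)
    then have "good U' V'" using cfg_good_eq[OF c0] g0 by blast
    then show "(U'@[a,b]@V', U'@[b,a]@V') \<in> R" using \<open>U'@[a,b]@V' \<in> perms m\<close> by (simp add: good_def)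
  next
    show "is_fence m (a,b,L)" using ab ab1 unfolding is_fence_def L_def by auto
  qed
qed



subsection \<open>Forcing\<close>

lemma forcing:
  assumes R: "lattice_cong m R" and f: "is_fence m (a,b,L)" and y: "a < y" "y < b"
    and h: "(a,y,L \<inter> {a<..<y}) \<in> fences_of m R \<or> (y,b,L \<inter> {y<..<b}) \<in> fences_of m R"
  shows "(a,b,L) \<in> fences_of m R"
proof -
  have ab: "1 \<le> a" "a < b" "b \<le> m" "L \<subseteq> {a<..<b}" using f by (auto simp: is_fence_def)
  define U where "U = sorted_list_of_set (L - {y})"
  define V where "V = sorted_list_of_set ({1..m} - {a,b,y} - L)"
  have fL: "finite L" using ab(4) finite_subset by blast
  have sU: "set U = L - {y}" "distinct U" unfolding U_def using fL by auto
  have sV: "set V = {1..m} - {a,b,y} - L" "distinct V" unfolding V_def by auto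
  have Lsub: "L \<subseteq> {1..m}" using ab by auto
  have d1: "a \<notin> set U" "b \<notin> set U" "y \<notin> set U" using sU(1) ab(4) by auto
  have d2: "a \<notin> set V" "b \<notin> set V" "y \<notin> set V" "set U \<inter> set V = {}" using sU(1) sV(1) by auto
  have d3: "a \<noteq> y" "a \<noteq> b" "y \<noteq> b" using y by auto
  have "set (U@[a,y,b]@V) = (L - {y}) \<union> {a,y,b} \<union> ({1..m} - {a,b,y} - L)" using sU sV by auto
  also have "\<dots> = {1..m}" using Lsub ab y by auto
  finally have p: "U@[a,y,b]@V \<in> perms m"
    unfolding perms_def using sU(2) sV(2) d1 d2 d3 by auto
  interpret hex m U V a y b using p y by unfold_locales auto
  have short: "(e123, e213) \<in> R \<or> (e123, e132) \<in> R"
  proof (cases "(a,y,L \<inter> {a<..<y}) \<in> fences_of m R")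
    case True
    have "(U@[a,y]@(b#V), U@[y,a]@(b#V)) \<in> R"
      by (rule edge_in_fence[OF True]) (use p sU y ab in auto)
    then show ?thesis by simp
  next
    case False
    then have h2: "(y,b,L \<inter> {y<..<b}) \<in> fences_of m R" using h by blast
    have "((U@[a])@[y,b]@V, (U@[a])@[b,y]@V) \<in> R"
      by (rule edge_in_fence[OF h2]) (use p sU y ab in auto)
    then show ?thesis by simp
  qed
  show ?thesis
  proof (cases "y \<in> L")
    case True
    have "(e213, e231) \<in> R" using short HX1[OF R] HX2[OF R] by blast
    then have e: "((U@[y])@[a,b]@V, (U@[y])@[b,a]@V) \<in> R" by simp
    have p2: "(U@[y])@[a,b]@V \<in> perms m" using ps(1) by simp
    have "(a,b,{x\<in>{a<..<b}. x \<in> set (U@[y])}) \<in> fences_of m R"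
      using uniform[OF R p2 ab(2) e] .
    moreover have "{x\<in>{a<..<b}. x \<in> set (U@[y])} = L" using sU True ab(4) by auto
    ultimately show ?thesis by simp
  next
    case False
    have "(e132, e312) \<in> R" using short HX1[OF R] HX2[OF R] by blast
    then have e: "(U@[a,b]@(y#V), U@[b,a]@(y#V)) \<in> R" by simp
    have p2: "U@[a,b]@(y#V) \<in> perms m" using ps(4) by simp
    have "(a,b,{x\<in>{a<..<b}. x \<in> set U}) \<in> fences_of m R"
      using uniform[OF R p2 ab(2) e] .
    moreover have "{x\<in>{a<..<b}. x \<in> set U} = L" using sU False ab(4) by auto
    ultimately show ?thesis by simp
  qed
qed

lemma crossing:
  assumes R: "lattice_cong m R" and s: "(s, Suc s, {}) \<in> fences_of m R"
  shows "is_fence m (a,b,L) \<Longrightarrow> a \<le> s \<Longrightarrow> s < b \<Longrightarrow> (a,b,L) \<in> fences_of m R"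
proof (induction "b - a" arbitrary: a b L rule: less_induct)
  case less
  have ab: "1 \<le> a" "a < b" "b \<le> m" "L \<subseteq> {a<..<b}" using less.prems by (auto simp: is_fence_def)
  consider "a = s \<and> b = Suc s" | "a < s" | "a = s \<and> Suc s < b" using less.prems by arith
  then show ?case
  proof cases
    case 1
    then have "{a<..<b} = {}" by auto
    then have "L = {}" using ab by blast
    then show ?thesis using 1 s by simp
  next
    case 2
    have "(s,b,L \<inter> {s<..<b}) \<in> fences_of m R"
      by (rule less.hyps) (use 2 ab less.prems in \<open>auto simp: is_fence_def\<close>)
    then show ?thesis using forcing[OF R less.prems(1), of s] 2 less.prems by auto
  next
    case 3
    have "(a,Suc s,L \<inter> {a<..<Suc s}) \<in> fences_of m R"
      by (rule less.hyps) (use 3 ab less.prems in \<open>auto simp: is_fence_def\<close>)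
    then show ?thesis using forcing[OF R less.prems(1), of "Suc s"] 3 less.prems by auto
  qed
qed

subsection \<open>Joins exist\<close>

lemma sorted_exists:
  "finite S \<Longrightarrow> (\<forall>x\<in>S. \<forall>y\<in>S. x \<noteq> y \<longrightarrow> r x y \<or> r y x) \<Longrightarrow>
   (\<forall>x\<in>S. \<forall>y\<in>S. \<forall>z\<in>S. r x y \<longrightarrow> r y z \<longrightarrow> r x z) \<Longrightarrow> \<exists>zs. set zs = S \<and> sorted_wrt r zs"
proof (induction S rule: finite_induct)
  case empty show ?case by (rule exI[of _ "[]"]) simp
next
  case (insert u F)
  have p1: "\<forall>x\<in>F. \<forall>y\<in>F. x \<noteq> y \<longrightarrow> r x y \<or> r y x" using insert.prems(1) by blast
  have p2: "\<forall>x\<in>F. \<forall>y\<in>F. \<forall>z\<in>F. r x y \<longrightarrow> r y z \<longrightarrow> r x z" using insert.prems(2) by blast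
  obtain zs where zs: "set zs = F" "sorted_wrt r zs" using insert.IH[OF p1 p2] by blast
  define zs' where "zs' = filter (\<lambda>v. r v u) zs @ [u] @ filter (\<lambda>v. r u v) zs"
  have "set zs' = insert u F"
  proof -
    have "\<forall>v\<in>F. r v u \<or> r u v" using insert.prems(1) insert.hyps(2) by (metis insertCI)
    then show ?thesis unfolding zs'_def using zs(1) by auto
  qed
  moreover have "sorted_wrt r zs'"
  proof -
    have c1: "\<forall>a\<in>set (filter (\<lambda>v. r v u) zs). \<forall>b\<in>set (filter (\<lambda>v. r u v) zs). r a b"
    proof (intro ballI)
      fix a b assume "a \<in> set (filter (\<lambda>v. r v u) zs)" "b \<in> set (filter (\<lambda>v. r u v) zs)"
      then have h: "a \<in> insert u F" "b \<in> insert u F" "r a u" "r u b" using zs(1) by auto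
      show "r a b" by (rule insert.prems(2)[rule_format, OF h(1) insertI1 h(2) h(3) h(4)])
    qed
    have s1: "sorted_wrt r (filter (\<lambda>v. r v u) zs)" "sorted_wrt r (filter (\<lambda>v. r u v) zs)"
      using zs(2) by (simp_all add: sorted_wrt_filter)
    have c2: "\<forall>a\<in>set (filter (\<lambda>v. r v u) zs). r a u" "\<forall>b\<in>set (filter (\<lambda>v. r u v) zs). r u b"
      by auto
    have eq: "sorted_wrt r (A @ [u] @ B) \<longleftrightarrow> sorted_wrt r A \<and> sorted_wrt r B \<and> (\<forall>y\<in>set B. r u y)
       \<and> (\<forall>x\<in>set A. r x u) \<and> (\<forall>x\<in>set A. \<forall>y\<in>set B. r x y)" for A B
      by (simp add: sorted_wrt_append) blast
    show ?thesis unfolding zs'_def eq using s1 c1 c2 by blast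
  qed
  ultimately show ?case by blast
qed

lemma sorted_wrt_distinct': "(\<forall>x. \<not> r x x) \<Longrightarrow> sorted_wrt r zs \<Longrightarrow> distinct zs"
  by (induction zs) auto

lemma sorted_wrt_bef: "sorted_wrt r zs \<Longrightarrow> bef zs u v \<Longrightarrow> r u v"
  by (induction zs) auto

definition Drel :: "nat list \<Rightarrow> (nat \<times> nat) set" where
  "Drel w = {(c,d). d < c \<and> bef w c d}"

lemma join_exists:
  assumes x: "x \<in> perms m" and y: "y \<in> perms m"
  shows "\<exists>z. is_join m x y z"
proof -
  define S where "S = {1..m::nat}"
  define B where "B = Drel x \<union> Drel y"
  define T where "T = B\<^sup>+"
  have sx: "set x = S" "distinct x" "set y = S" "distinct y" using x y by (auto simp: S_def perms_def)
  have Bd: "(c,d) \<in> B \<Longrightarrow> d < c \<and> c \<in> S \<and> d \<in> S" for c d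
    using sx bef_set unfolding B_def Drel_def by fastforce
  have T1: "(c,d) \<in> T \<Longrightarrow> d < c \<and> c \<in> S \<and> d \<in> S" for c d
    unfolding T_def
  proof (induction rule: trancl_induct)
    case (base d) then show ?case using Bd by blast
  next
    case (step y z) then show ?case using Bd[OF step.hyps(2)] by auto
  qed
  have T2: "(c,d) \<in> T \<Longrightarrow> (d,e) \<in> T \<Longrightarrow> (c,e) \<in> T" for c d e
    unfolding T_def by simp
  have Bco: "(c,d) \<in> B \<Longrightarrow> d < e \<Longrightarrow> e < c \<Longrightarrow> (c,e) \<in> B \<or> (e,d) \<in> B" for c d e
  proof -
    assume h: "(c,d) \<in> B" "d < e" "e < c"
    have eS: "e \<in> S" using h Bd[OF h(1)] unfolding S_def by auto
    have co: "bef w c d \<Longrightarrow> set w = S \<Longrightarrow> distinct w \<Longrightarrow> bef w c e \<or> bef w e d" for w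
    proof -
      assume a: "bef w c d" "set w = S" "distinct w"
      have "e \<noteq> d" using h by simp
      moreover have "d \<in> set w" using bef_set[OF a(1)] by blast
      ultimately have "bef w e d \<or> bef w d e" using bef_total[of e w d] a eS by auto
      then show ?thesis using bef_trans[OF a(3) a(1)] by blast
    qed
    show ?thesis using h(1) co[of x] co[of y] sx h(2,3) unfolding B_def Drel_def by auto
  qed
  have T3: "(c,d) \<in> T \<Longrightarrow> \<forall>e. d < e \<longrightarrow> e < c \<longrightarrow> (c,e) \<in> T \<or> (e,d) \<in> T" for c d
    unfolding T_def
  proof (induction rule: trancl_induct)
    case (base d)
    then show ?case using Bco by blast
  next
    case (step y' z)
    show ?case
    proof (intro allI impI)
      fix e assume e: "z < e" "e < c"
      have yc: "y' < c" using T1[of c y'] step.hyps(1) unfolding T_def by simp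
      have zy: "z < y'" using Bd step.hyps(2) by blast
      consider "e = y'" | "e < y'" | "y' < e" by arith
      then show "(c,e) \<in> B\<^sup>+ \<or> (e,z) \<in> B\<^sup>+"
      proof cases
        case 1 then show ?thesis using step.hyps(1) by simp
      next
        case 2
        then have "(y',e) \<in> B \<or> (e,z) \<in> B" using Bco[OF step.hyps(2)] e by simp
        then show ?thesis using step.hyps(1) by (meson trancl.trancl_into_trancl r_into_trancl)
      next
        case 3
        then have "(c,e) \<in> B\<^sup>+ \<or> (e,y') \<in> B\<^sup>+" using step.IH e by simp
        then show ?thesis using step.hyps(2) by (meson trancl.trancl_into_trancl)
      qed
    qed
  qed
  define r where "r u v \<longleftrightarrow> u \<in> S \<and> v \<in> S \<and> u \<noteq> v \<and> ((v < u \<and> (u,v) \<in> T) \<or> (u < v \<and> (v,u) \<notin> T))" for u v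
  have rtot: "\<forall>u\<in>S. \<forall>v\<in>S. u \<noteq> v \<longrightarrow> r u v \<or> r v u" unfolding r_def by auto
  have rtr: "\<forall>u\<in>S. \<forall>v\<in>S. \<forall>w\<in>S. r u v \<longrightarrow> r v w \<longrightarrow> r u w"
  proof (intro ballI impI)
    fix u v w assume uvw: "u \<in> S" "v \<in> S" "w \<in> S" "r u v" "r v w"
    show "r u w"
    proof (cases "u = w")
      case True
      then show ?thesis using uvw unfolding r_def by auto
    next
      case False
      consider "u < v" "v < w" | "v < u" "w < v" | "u < v" "w < v" | "v < u" "v < w"
        using uvw unfolding r_def by auto
      then show ?thesis
      proof cases
        case 1
        then have h: "(v,u) \<notin> T" "(w,v) \<notin> T" using uvw unfolding r_def by auto
        have "(w,u) \<notin> T"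
        proof
          assume "(w,u) \<in> T"
          then show False using T3[of w u] 1 h by auto
        qed
        then show ?thesis using uvw 1 unfolding r_def by auto
      next
        case 2
        then have h: "(u,v) \<in> T" "(v,w) \<in> T" using uvw unfolding r_def by auto
        then show ?thesis using uvw 2 T2[OF h] unfolding r_def by auto
      next
        case 3
        then have h: "(v,u) \<notin> T" "(v,w) \<in> T" using uvw unfolding r_def by auto
        consider "u < w" | "w < u" using False by arith
        then show ?thesis
        proof cases
          case a: 1
          have "(w,u) \<notin> T" using T2[OF h(2)] h(1) by blast
          then show ?thesis using uvw a False unfolding r_def by auto
        next
          case a: 2
          have "(u,w) \<in> T" using T3[OF h(2)] a 3 h(1) by auto
          then show ?thesis using uvw a False unfolding r_def by auto
        qed
      next
        case 4
        then have h: "(u,v) \<in> T" "(w,v) \<notin> T" using uvw unfolding r_def by auto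
        consider "u < w" | "w < u" using False by arith
        then show ?thesis
        proof cases
          case a: 1
          have "(w,u) \<notin> T" using T2[OF _ h(1)] h(2) by blast
          then show ?thesis using uvw a False unfolding r_def by auto
        next
          case a: 2
          have "(u,w) \<in> T" using T3[OF h(1)] a 4 h(2) by auto
          then show ?thesis using uvw a False unfolding r_def by auto
        qed
      qed
    qed
  qed
  obtain z where z: "set z = S" "sorted_wrt r z"
  proof -
    have "finite S" unfolding S_def by simp
    then show ?thesis using sorted_exists[of S r] rtot rtr that by blast
  qed
  have rirr: "\<forall>u. \<not> r u u" unfolding r_def by auto
  have dz: "distinct z" using sorted_wrt_distinct'[OF rirr z(2)] .
  have rasym: "r u v \<Longrightarrow> \<not> r v u" for u v
  proof
    assume h: "r u v" "r v u"
    then have "u \<in> S" "v \<in> S" unfolding r_def by auto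
    then have "r u u" using rtr h by blast
    then show False using rirr by blast
  qed
  have befz: "bef z u v \<longleftrightarrow> r u v" for u v
  proof
    assume "bef z u v" then show "r u v" using sorted_wrt_bef[OF z(2)] by blast
  next
    assume ruv: "r u v"
    then have "u \<in> set z" "v \<in> set z" "u \<noteq> v" using z(1) unfolding r_def by auto
    then have "bef z u v \<or> bef z v u" using bef_total[of u z v] by blast
    then show "bef z u v" using sorted_wrt_bef[OF z(2)] rasym ruv by blast
  qed
  have invz1: "(a,b) \<in> inversions z \<longleftrightarrow> a < b \<and> (b,a) \<in> T" for a b
  proof -
    have "(a,b) \<in> inversions z \<longleftrightarrow> a < b \<and> r b a" unfolding inv_bef befz by simp
    also have "\<dots> \<longleftrightarrow> a < b \<and> (b,a) \<in> T" unfolding r_def using T1[of b a] by auto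
    finally show ?thesis .
  qed
  have invz: "inversions z = {(a,b). a < b \<and> (b,a) \<in> T}" using invz1 by auto
  have zp: "z \<in> perms m" using z dz unfolding perms_def S_def by auto
  have "is_join m x y z"
    unfolding is_join_def weak_le_def
  proof (intro conjI ballI impI)
    show "z \<in> perms m" by (rule zp)
    have "(a,b) \<in> inversions z" if "(a,b) \<in> inversions x \<or> (a,b) \<in> inversions y" for a b
    proof -
      have "a < b" "(b,a) \<in> B" using that unfolding inv_bef B_def Drel_def by auto
      then show ?thesis using invz1 unfolding T_def by auto
    qed
    then show "inversions x \<subseteq> inversions z" "inversions y \<subseteq> inversions z" by auto
    fix u assume u: "u \<in> perms m" "inversions x \<subseteq> inversions u \<and> inversions y \<subseteq> inversions u"
    have du: "distinct u" using u by (simp add: perms_def)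
    have "B \<subseteq> Drel u" using u unfolding B_def Drel_def inv_bef by auto
    moreover have "trans (Drel u)" unfolding trans_def Drel_def using bef_trans[OF du] by auto
    ultimately have "T \<subseteq> Drel u" unfolding T_def by (metis trancl_id trancl_mono subsetI)
    then show "inversions z \<subseteq> inversions u" using invz1 unfolding inv_bef Drel_def by auto
  qed
  then show ?thesis by blast
qed

subsection \<open>Connectivity of congruence classes\<close>

definition cover :: "nat list \<Rightarrow> nat list \<Rightarrow> bool" where
  "cover w v \<longleftrightarrow> (\<exists>U a b V. a < b \<and> w = U@[a,b]@V \<and> v = U@[b,a]@V)"

definition CE :: "(nat list \<times> nat list) set \<Rightarrow> (nat list \<times> nat list) set" where
  "CE R = {(w,v). (w,v) \<in> R \<and> (cover w v \<or> cover v w)}"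

lemma adj_exists:
  "bef x u v \<Longrightarrow> \<not> bef z u v \<Longrightarrow> distinct z \<Longrightarrow> set x \<subseteq> set z \<Longrightarrow>
   \<exists>U c d V. x = U@[c,d]@V \<and> \<not> bef z c d"
proof (induction x arbitrary: u)
  case Nil then show ?case by simp
next
  case (Cons h x')
  show ?case
  proof (cases "bef x' u v")
    case True
    have "set x' \<subseteq> set z" using Cons.prems(4) by simp
    then obtain U c d V where "x' = U@[c,d]@V" "\<not> bef z c d" using Cons.IH[OF True Cons.prems(2,3)] by blast
    then show ?thesis by (intro exI[of _ "h#U"]) auto
  next
    case False
    then have hu: "h = u" "v \<in> set x'" using Cons.prems by auto
    then obtain k x'' where x': "x' = k#x''" by (cases x') auto
    show ?thesis
    proof (cases "bef z h k")
      case False then show ?thesis using x' by (intro exI[of _ "[]"]) auto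
    next
      case True
      have "k \<noteq> v" using True Cons.prems(2) hu by auto
      then have "bef x' k v" using x' hu by auto
      moreover have "\<not> bef z k v" using bef_trans[OF Cons.prems(3) True] Cons.prems(2) hu by auto
      ultimately obtain U c d V where "x' = U@[c,d]@V" "\<not> bef z c d"
        using Cons.IH[of k] Cons.prems by auto
      then show ?thesis by (intro exI[of _ "h#U"]) auto
    qed
  qed
qed

lemma inv_finite: "finite (inversions w)"
proof -
  have "inversions w \<subseteq> set w \<times> set w" unfolding inv_bef by (blast dest: bef_set)
  then show ?thesis by (rule finite_subset) auto
qed

lemma up_chain:
  assumes R: "lattice_cong m R"
  shows "(x,z) \<in> R \<Longrightarrow> weak_le x z \<Longrightarrow> (x,z) \<in> (CE R)\<^sup>*"
proof (induction "card (inversions z - inversions x)" arbitrary: x rule: less_induct)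
  case less
  have xz: "x \<in> perms m" "z \<in> perms m" using cong_perms[OF R less.prems(1)] by auto
  have dx: "distinct x" "distinct z" "set x = set z" using xz by (auto simp: perms_def)
  show ?case
  proof (cases "inversions x = inversions z")
    case True
    then have "x = z" using inv_inj xz by blast
    then show ?thesis by simp
  next
    case False
    then obtain p q where pq: "(p,q) \<in> inversions z" "(p,q) \<notin> inversions x"
      using less.prems(2) unfolding weak_le_def by auto
    then have pq2: "p < q" "bef z q p" "\<not> bef x q p" unfolding inv_bef by auto
    then have "p \<in> set x" "q \<in> set x" using bef_set[OF pq2(2)] dx by auto
    then have "bef x p q" using bef_total pq2 by fastforce
    moreover have "\<not> bef z p q" using bef_asym[OF dx(2) pq2(2)] .
    ultimately obtain U c d V where x: "x = U@[c,d]@V" "\<not> bef z c d"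
      using adj_exists[OF _ _ dx(2)] dx by blast
    have cd: "c \<noteq> d" "c \<in> set z" "d \<in> set z" using dx x by auto
    then have bzdc: "bef z d c" using bef_total[OF cd(2) cd(3) cd(1)] x(2) by blast
    have "c < d"
    proof (rule ccontr)
      assume "\<not> c < d"
      then have "d < c" using cd by simp
      then have "(d,c) \<in> inversions x" unfolding inv_bef x(1) by (simp add: bef_append)
      moreover have "(d,c) \<notin> inversions z" unfolding inv_bef using x(2) by simp
      ultimately show False using less.prems(2) unfolding weak_le_def by blast
    qed
    define x' where "x' = U@[d,c]@V"
    have dxx: "distinct (U@[c,d]@V)" using dx x by simp
    have ix': "inversions x' = insert (c,d) (inversions x)" "(c,d) \<notin> inversions x"
      using inv_swap_up[OF dxx \<open>c < d\<close>] unfolding x'_def x(1) by auto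
    have x'p: "x' \<in> perms m" using xz x unfolding x'_def by (auto simp: perms_def)
    have cdz: "(c,d) \<in> inversions z" using bzdc \<open>c < d\<close> unfolding inv_bef by simp
    have le1: "weak_le x x'" "weak_le x' z" using ix' cdz less.prems(2) unfolding weak_le_def by auto
    have r1: "(x,x') \<in> R" "(x',z) \<in> R" using convex[OF R less.prems(1) x'p le1] by auto
    have "card (inversions z - inversions x') < card (inversions z - inversions x)"
    proof (rule psubset_card_mono)
      show "finite (inversions z - inversions x)" using inv_finite by simp
      show "inversions z - inversions x' \<subset> inversions z - inversions x" using ix' cdz by auto
    qed
    then have "(x',z) \<in> (CE R)\<^sup>*" using less.hyps r1 le1 by blast
    moreover have "(x,x') \<in> CE R" unfolding CE_def cover_def using r1 x \<open>c < d\<close> x'_def by blast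
    ultimately show ?thesis by simp
  qed
qed

lemma CE_sym: "(w,v) \<in> CE R \<Longrightarrow> lattice_cong m R \<Longrightarrow> (v,w) \<in> CE R"
  unfolding CE_def using cong_sym by blast

lemma connected:
  assumes R: "lattice_cong m R" and xy: "(x,y) \<in> R"
  shows "(x,y) \<in> (CE R)\<^sup>*"
proof -
  have p: "x \<in> perms m" "y \<in> perms m" using cong_perms[OF R xy] by auto
  obtain j where j: "is_join m x y j" using join_exists p by blast
  have le: "weak_le x j" "weak_le y j" using j by (auto simp: is_join_def)
  have "(x,j) \<in> R"
    using cong_join[OF R xy p(1) join_le[OF p(1)] join_comm[OF j]] by (simp add: weak_le_def)
  moreover have "(y,j) \<in> R"
    using cong_join[OF R cong_sym[OF R xy] p(2) join_le[OF p(2)] j] by (simp add: weak_le_def)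
  ultimately have c: "(x,j) \<in> (CE R)\<^sup>*" "(y,j) \<in> (CE R)\<^sup>*" using up_chain[OF R] le by auto
  have "(j,y) \<in> (CE R)\<^sup>*"
    using c(2) by (induction rule: rtrancl_induct) (auto intro: CE_sym[OF _ R] converse_rtrancl_into_rtrancl)
  then show ?thesis using c(1) by simp
qed



lemma class_mem: "equiv S R \<Longrightarrow> X \<in> S // R \<Longrightarrow> x \<in> X \<Longrightarrow> X = R``{x}"
  by (metis Image_singleton_iff equiv_class_eq quotientE)

lemma iso_abstract:
  fixes phiA phiB :: "nat list \<Rightarrow> nat list"
  assumes eqR: "equiv (perms m) R" and eqA: "equiv (perms s) A" and eqB: "equiv (perms k) B"
    and maps: "\<And>w. w \<in> perms m \<Longrightarrow> phiA w \<in> perms s \<and> phiB w \<in> perms k"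
    and iff: "\<And>x y. x \<in> perms m \<Longrightarrow> y \<in> perms m \<Longrightarrow>
               (x,y) \<in> R \<longleftrightarrow> (phiA x, phiA y) \<in> A \<and> (phiB x, phiB y) \<in> B"
    and surj: "\<And>p q. p \<in> perms s \<Longrightarrow> q \<in> perms k \<Longrightarrow> \<exists>w\<in>perms m. phiA w = p \<and> phiB w = q"
    and mono: "\<And>x y. x \<in> perms m \<Longrightarrow> y \<in> perms m \<Longrightarrow> weak_le x y \<Longrightarrow>
               weak_le (phiA x) (phiA y) \<and> weak_le (phiB x) (phiB y)"
    and lift: "\<And>p p' q q'. p \<in> perms s \<Longrightarrow> p' \<in> perms s \<Longrightarrow> q \<in> perms k \<Longrightarrow> q' \<in> perms k \<Longrightarrow>
               weak_le p p' \<Longrightarrow> weak_le q q' \<Longrightarrow>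
               \<exists>w w'. w \<in> perms m \<and> w' \<in> perms m \<and> phiA w = p \<and> phiB w = q \<and> phiA w' = p' \<and> phiB w' = q'
                 \<and> weak_le w w'"
  shows "order_iso (quot m R) quot_le (quot s A \<times> quot k B) (prod_le quot_le quot_le)"
proof -
  define \<Phi> where "\<Phi> X = (A``{phiA (SOME x. x \<in> X)}, B``{phiB (SOME x. x \<in> X)})" for X
  have cls: "X \<in> quot m R \<Longrightarrow> \<exists>x\<in>perms m. X = R``{x}" for X
    unfolding quot_def by (auto elim: quotientE)
  have selfR: "x \<in> perms m \<Longrightarrow> x \<in> R``{x}" for x using eqR equiv_class_self by metis
  have memp: "X \<in> quot m R \<Longrightarrow> x \<in> X \<Longrightarrow> x \<in> perms m" for X x
    using eqR unfolding quot_def by (meson in_quotient_imp_subset subsetD)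
  have Phi: "X \<in> quot m R \<Longrightarrow> x \<in> X \<Longrightarrow> \<Phi> X = (A``{phiA x}, B``{phiB x})" for X x
  proof -
    assume X: "X \<in> quot m R" "x \<in> X"
    define x' where "x' = (SOME x. x \<in> X)"
    have x': "x' \<in> X" unfolding x'_def using X(2) by (rule someI)
    have "X = R``{x}" using class_mem[OF eqR] X unfolding quot_def by blast
    then have "(x,x') \<in> R" using x' by auto
    then have "(phiA x, phiA x') \<in> A" "(phiB x, phiB x') \<in> B" using iff memp X x' by blast+
    then have "A``{phiA x} = A``{phiA x'}" "B``{phiB x} = B``{phiB x'}"
      using equiv_class_eq[OF eqA] equiv_class_eq[OF eqB] by auto
    then show ?thesis unfolding \<Phi>_def x'_def by simp
  qed
  have inj: "inj_on \<Phi> (quot m R)"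
  proof (rule inj_onI)
    fix X Y assume XY: "X \<in> quot m R" "Y \<in> quot m R" "\<Phi> X = \<Phi> Y"
    obtain x y where xy: "x \<in> perms m" "X = R``{x}" "y \<in> perms m" "Y = R``{y}" using cls XY by metis
    have "\<Phi> X = (A``{phiA x}, B``{phiB x})" using Phi[OF XY(1)] xy selfR by auto
    moreover have "\<Phi> Y = (A``{phiA y}, B``{phiB y})" using Phi[OF XY(2)] xy selfR by auto
    ultimately have "A``{phiA x} = A``{phiA y}" "B``{phiB x} = B``{phiB y}" using XY by auto
    then have "(phiA x, phiA y) \<in> A" "(phiB x, phiB y) \<in> B"
      using eq_equiv_class_iff[OF eqA] eq_equiv_class_iff[OF eqB] maps xy by blast+
    then have "(x,y) \<in> R" using iff xy by blast
    then show "X = Y" using xy equiv_class_eq[OF eqR] by simp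
  qed
  have img: "\<Phi> ` quot m R = quot s A \<times> quot k B"
  proof
    show "\<Phi> ` quot m R \<subseteq> quot s A \<times> quot k B"
    proof
      fix Z assume "Z \<in> \<Phi> ` quot m R"
      then obtain X where X: "X \<in> quot m R" "Z = \<Phi> X" by blast
      then obtain x where x: "x \<in> perms m" "X = R``{x}" using cls by blast
      then have "Z = (A``{phiA x}, B``{phiB x})" using Phi X selfR by auto
      then show "Z \<in> quot s A \<times> quot k B" unfolding quot_def using maps x by (auto intro: quotientI)
    qed
  next
    show "quot s A \<times> quot k B \<subseteq> \<Phi> ` quot m R"
    proof
      fix Z assume "Z \<in> quot s A \<times> quot k B"
      then obtain p q where pq: "p \<in> perms s" "q \<in> perms k" "Z = (A``{p}, B``{q})"
        unfolding quot_def by (auto elim!: quotientE)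
      obtain w where w: "w \<in> perms m" "phiA w = p" "phiB w = q" using surj pq by blast
      have X: "R``{w} \<in> quot m R" unfolding quot_def using w by (auto intro: quotientI)
      have "\<Phi> (R``{w}) = Z" using Phi[OF X selfR[OF w(1)]] w pq by simp
      then show "Z \<in> \<Phi> ` quot m R" using X by blast
    qed
  qed
  have ord: "quot_le X Y \<longleftrightarrow> prod_le quot_le quot_le (\<Phi> X) (\<Phi> Y)"
    if XY: "X \<in> quot m R" "Y \<in> quot m R" for X Y
  proof -
    obtain x y where xy: "x \<in> perms m" "X = R``{x}" "y \<in> perms m" "Y = R``{y}" using cls XY by metis
    have PX: "\<Phi> X = (A``{phiA x}, B``{phiB x})" "\<Phi> Y = (A``{phiA y}, B``{phiB y})"
      using Phi[OF XY(1)] Phi[OF XY(2)] xy selfR by auto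
    show ?thesis
    proof
      assume "quot_le X Y"
      then obtain x' y' where h: "x' \<in> X" "y' \<in> Y" "weak_le x' y'" unfolding quot_le_def by blast
      have "x' \<in> perms m" "y' \<in> perms m" using memp XY h by auto
      then have m: "weak_le (phiA x') (phiA y')" "weak_le (phiB x') (phiB y')" using mono h by auto
      have "\<Phi> X = (A``{phiA x'}, B``{phiB x'})" "\<Phi> Y = (A``{phiA y'}, B``{phiB y'})"
        using Phi XY h by auto
      moreover have "phiA x' \<in> A``{phiA x'}" "phiB x' \<in> B``{phiB x'}" "phiA y' \<in> A``{phiA y'}" "phiB y' \<in> B``{phiB y'}"
        using maps \<open>x' \<in> perms m\<close> \<open>y' \<in> perms m\<close> equiv_class_self eqA eqB by metis+
      ultimately show "prod_le quot_le quot_le (\<Phi> X) (\<Phi> Y)"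
        unfolding prod_le_def quot_le_def using m by auto
    next
      assume "prod_le quot_le quot_le (\<Phi> X) (\<Phi> Y)"
      then obtain p p' q q' where h: "p \<in> A``{phiA x}" "p' \<in> A``{phiA y}" "weak_le p p'"
        "q \<in> B``{phiB x}" "q' \<in> B``{phiB y}" "weak_le q q'"
        unfolding prod_le_def quot_le_def PX by auto
      have inA: "(phiA x, p) \<in> A" "(phiA y, p') \<in> A" "(phiB x, q) \<in> B" "(phiB y, q') \<in> B" using h by auto
      have ps: "p \<in> perms s" "p' \<in> perms s" "q \<in> perms k" "q' \<in> perms k"
        using inA eqA eqB unfolding equiv_def refl_on_def by blast+
      obtain w w' where w: "w \<in> perms m" "w' \<in> perms m" "phiA w = p" "phiB w = q" "phiA w' = p'" "phiB w' = q'"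
        "weak_le w w'" using lift[OF ps h(3) h(6)] by blast
      have "(x,w) \<in> R" "(y,w') \<in> R" using iff xy w inA by auto
      then have "w \<in> X" "w' \<in> Y" using xy by auto
      then show "quot_le X Y" unfolding quot_le_def using w by blast
    qed
  qed
  show ?thesis unfolding order_iso_def bij_betw_def using inj img ord by blast
qed

lemma order_iso_sym:
  assumes "order_iso P leP Q leQ" shows "order_iso Q leQ P leP"
proof -
  obtain f where f: "bij_betw f P Q" "\<forall>x\<in>P. \<forall>y\<in>P. leP x y \<longleftrightarrow> leQ (f x) (f y)"
    using assms unfolding order_iso_def by blast
  define g where "g = the_inv_into P f"
  have g: "bij_betw g Q P" unfolding g_def using f(1) bij_betw_the_inv_into by blast
  have fg: "y \<in> Q \<Longrightarrow> f (g y) = y" for y unfolding g_def using f(1)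
    by (meson bij_betw_def f_the_inv_into_f_bij_betw)
  have "\<forall>x\<in>Q. \<forall>y\<in>Q. leQ x y \<longleftrightarrow> leP (g x) (g y)"
  proof (intro ballI)
    fix x y assume xy: "x \<in> Q" "y \<in> Q"
    then have "g x \<in> P" "g y \<in> P" using g bij_betwE by blast+
    then have "leP (g x) (g y) \<longleftrightarrow> leQ (f (g x)) (f (g y))" using f(2) by blast
    then show "leQ x y \<longleftrightarrow> leP (g x) (g y)" using fg xy by simp
  qed
  then show ?thesis unfolding order_iso_def using g by blast
qed

lemma order_iso_trans:
  assumes "order_iso P leP Q leQ" "order_iso Q leQ S leS" shows "order_iso P leP S leS"
proof -
  obtain f where f: "bij_betw f P Q" "\<forall>x\<in>P. \<forall>y\<in>P. leP x y \<longleftrightarrow> leQ (f x) (f y)"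
    using assms(1) unfolding order_iso_def by blast
  obtain g where g: "bij_betw g Q S" "\<forall>x\<in>Q. \<forall>y\<in>Q. leQ x y \<longleftrightarrow> leS (g x) (g y)"
    using assms(2) unfolding order_iso_def by blast
  have "bij_betw (g \<circ> f) P S" using f(1) g(1) bij_betw_trans by blast
  moreover have "\<forall>x\<in>P. \<forall>y\<in>P. leP x y \<longleftrightarrow> leS ((g \<circ> f) x) ((g \<circ> f) y)"
  proof (intro ballI)
    fix x y assume xy: "x \<in> P" "y \<in> P"
    then have "f x \<in> Q" "f y \<in> Q" using f(1) bij_betwE by blast+
    then show "leP x y \<longleftrightarrow> leS ((g \<circ> f) x) ((g \<circ> f) y)" using f(2) g(2) xy by simp
  qed
  ultimately show ?thesis unfolding order_iso_def by blast
qed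



locale prodset =
  fixes m s t :: nat and R A B :: "(nat list \<times> nat list) set"
  assumes s1: "1 \<le> s" and sm: "s \<le> m" and t: "t = s \<or> t = Suc s" and tm: "t \<le> m"
    and R: "lattice_cong m R" and A: "lattice_cong s A" and B: "lattice_cong (m+1-t) B"
    and H1: "\<And>U c d V. U@[c,d]@V \<in> perms m \<Longrightarrow> c < t \<Longrightarrow> s < d \<Longrightarrow> (U@[c,d]@V, U@[d,c]@V) \<in> R"
    and H2: "\<And>a b L. 1 \<le> a \<Longrightarrow> a < b \<Longrightarrow> b \<le> s \<Longrightarrow> L \<subseteq> {a<..<b} \<Longrightarrow>
               ((a,b,L) \<in> fences_of s A \<longleftrightarrow> (a,b,L) \<in> fences_of m R)"
    and H3: "\<And>a b L. 1 \<le> a \<Longrightarrow> a < b \<Longrightarrow> b \<le> m+1-t \<Longrightarrow> L \<subseteq> {a<..<b} \<Longrightarrow>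
               ((a,b,L) \<in> fences_of (m+1-t) B \<longleftrightarrow> shift_fence (t-1) (a,b,L) \<in> fences_of m R)"
    and GA: "\<And>p q. p \<in> perms s \<Longrightarrow> q \<in> perms (m+1-t) \<Longrightarrow>
               \<exists>X Y. X@p@Y \<in> perms m \<and> filter (\<lambda>x. t \<le> x) (X@p@Y) = map (\<lambda>x. x + (t-1)) q
                 \<and> (\<forall>x\<in>set X \<union> set Y. s < x)"
    and GB: "\<And>p q. p \<in> perms s \<Longrightarrow> q \<in> perms (m+1-t) \<Longrightarrow>
               \<exists>X Y. X@map (\<lambda>x. x + (t-1)) q@Y \<in> perms m \<and> filter (\<lambda>x. x \<le> s) (X@map (\<lambda>x. x + (t-1)) q@Y) = p
                 \<and> (\<forall>x\<in>set X \<union> set Y. x < t)"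
    and G2: "\<And>p p' q q'. p \<in> perms s \<Longrightarrow> p' \<in> perms s \<Longrightarrow> q \<in> perms (m+1-t) \<Longrightarrow> q' \<in> perms (m+1-t) \<Longrightarrow>
               weak_le p p' \<Longrightarrow> weak_le q q' \<Longrightarrow>
               \<exists>w w'. w \<in> perms m \<and> w' \<in> perms m \<and> filter (\<lambda>x. x \<le> s) w = p
                 \<and> map (\<lambda>x. x - (t-1)) (filter (\<lambda>x. t \<le> x) w) = q
                 \<and> filter (\<lambda>x. x \<le> s) w' = p' \<and> map (\<lambda>x. x - (t-1)) (filter (\<lambda>x. t \<le> x) w') = q'
                 \<and> weak_le w w'"
begin

definition phi1 :: "nat list \<Rightarrow> nat list" where "phi1 w = filter (\<lambda>x. x \<le> s) w"
definition phi2 :: "nat list \<Rightarrow> nat list" where "phi2 w = map (\<lambda>x. x - (t-1)) (filter (\<lambda>x. t \<le> x) w)"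

abbreviation "k \<equiv> m + 1 - t"

lemma t1: "1 \<le> t" "s \<le> t" "t \<le> Suc s" using t s1 by auto

lemma inj_g: "inj_on (\<lambda>x. x - (t-1)) {x. t \<le> x}"
  unfolding inj_on_def using t1 by auto

lemma phi1_perm: "w \<in> perms m \<Longrightarrow> phi1 w \<in> perms s"
  unfolding phi1_def perms_def using sm by auto

lemma phi2_perm: "w \<in> perms m \<Longrightarrow> phi2 w \<in> perms k"
proof -
  assume w: "w \<in> perms m"
  have d: "distinct (filter (\<lambda>x. t \<le> x) w)" using w by (simp add: perms_def)
  have "inj_on (\<lambda>x. x - (t-1)) (set (filter (\<lambda>x. t \<le> x) w))"
    using inj_g by (rule inj_on_subset) auto
  then have d2: "distinct (phi2 w)" unfolding phi2_def using d by (simp add: distinct_map)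
  have "set (phi2 w) = (\<lambda>x. x - (t-1)) ` {t..m}" unfolding phi2_def using w t1
    by (auto simp: perms_def)
  also have "\<dots> = {1..k}"
  proof
    show "(\<lambda>x. x - (t-1)) ` {t..m} \<subseteq> {1..k}" using t1 by auto
    show "{1..k} \<subseteq> (\<lambda>x. x - (t-1)) ` {t..m}"
    proof
      fix y assume "y \<in> {1..k}"
      then have "y + (t-1) \<in> {t..m}" "y = y + (t-1) - (t-1)" using t1 tm by auto
      then show "y \<in> (\<lambda>x. x - (t-1)) ` {t..m}" by blast
    qed
  qed
  finally show ?thesis using d2 by (simp add: perms_def)
qed

lemma phi_mono:
  assumes "x \<in> perms m" "y \<in> perms m" "weak_le x y"
  shows "weak_le (phi1 x) (phi1 y) \<and> weak_le (phi2 x) (phi2 y)"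
proof
  show "weak_le (phi1 x) (phi1 y)"
    using assms(3) unfolding weak_le_def phi1_def inv_bef by (auto simp: bef_filter)
  show "weak_le (phi2 x) (phi2 y)" unfolding weak_le_def
  proof
    fix e assume e: "e \<in> inversions (phi2 x)"
    obtain a' b' where ab': "e = (a',b')" by (cases e)
    then have h: "a' < b'" "bef (phi2 x) b' a'" using e unfolding inv_bef by auto
    then obtain b a where ba: "b' = b - (t-1)" "a' = a - (t-1)" "bef (filter (\<lambda>x. t \<le> x) x) b a"
      unfolding phi2_def bef_map by blast
    then have q: "t \<le> a" "t \<le> b" "bef x b a" by (auto simp: bef_filter)
    have "a < b" using h ba q by simp
    then have "(a,b) \<in> inversions y" using assms(3) q unfolding weak_le_def inv_bef by auto
    then have "bef (filter (\<lambda>x. t \<le> x) y) b a" using q by (simp add: inv_bef bef_filter)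
    then have "bef (phi2 y) b' a'" unfolding phi2_def bef_map using ba by blast
    then show "e \<in> inversions (phi2 y)" using ab' h by (simp add: inv_bef)
  qed
qed

lemma phi2_eq_filter:
  assumes "phi2 w = phi2 w'" shows "filter (\<lambda>x. t \<le> x) w = filter (\<lambda>x. t \<le> x) w'"
proof (rule map_inj_on)
  show "map (\<lambda>x. x - (t-1)) (filter (\<lambda>x. t \<le> x) w) = map (\<lambda>x. x - (t-1)) (filter (\<lambda>x. t \<le> x) w')"
    using assms unfolding phi2_def .
  show "inj_on (\<lambda>x. x - (t-1)) (set (filter (\<lambda>x. t \<le> x) w) \<union> set (filter (\<lambda>x. t \<le> x) w'))"
    using inj_g by (rule inj_on_subset) auto
qed

lemma same_phi:
  assumes w: "w \<in> perms m" "w' \<in> perms m" and e: "phi1 w = phi1 w'" "phi2 w = phi2 w'"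
  shows "(w,w') \<in> R"
proof -
  define Sw where "Sw c d \<longleftrightarrow> (c < t \<and> s < d) \<or> (d < t \<and> s < c)" for c d :: nat
  define Q where "Q z \<longleftrightarrow> (z \<in> perms m \<longrightarrow> (w,z) \<in> R)" for z
  have fQ: "filter (\<lambda>x. t \<le> x) w = filter (\<lambda>x. t \<le> x) w'" using phi2_eq_filter e(2) .
  have fP: "filter (\<lambda>x. x \<le> s) w = filter (\<lambda>x. x \<le> s) w'" using e(1) unfolding phi1_def .
  have dw: "distinct w" "distinct w'" "set w' = set w" using w by (auto simp: perms_def)
  have "Q w'"
  proof (rule reorder[of Sw Q])
    fix U1 c d U2 assume sw: "Sw c d" and q: "Q (U1@[c,d]@U2)"
    show "Q (U1@[d,c]@U2)" unfolding Q_def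
    proof
      assume p': "U1@[d,c]@U2 \<in> perms m"
      then have p: "U1@[c,d]@U2 \<in> perms m" using perms_swap by fastforce
      then have r1: "(w, U1@[c,d]@U2) \<in> R" using q unfolding Q_def by blast
      have "(U1@[c,d]@U2, U1@[d,c]@U2) \<in> R"
      proof (cases "c < t \<and> s < d")
        case True then show ?thesis using H1[OF p] by blast
      next
        case False
        then have "d < t" "s < c" using sw unfolding Sw_def by auto
        then show ?thesis using H1[OF p'] cong_sym[OF R] by blast
      qed
      then show "(w, U1@[d,c]@U2) \<in> R" using cong_trans[OF R r1] by blast
    qed
  next
    show "Q w" unfolding Q_def using cong_refl[OF R] by blast
    show "distinct w" "distinct w'" "set w' = set w" using dw by auto
  next
    fix x y assume b: "bef w x y" "bef w' y x"
    have xy: "x \<in> {1..m}" "y \<in> {1..m}" using bef_set[OF b(1)] w by (auto simp: perms_def)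
    have "\<not> (x \<le> s \<and> y \<le> s)"
    proof
      assume h: "x \<le> s \<and> y \<le> s"
      then have "bef (filter (\<lambda>x. x \<le> s) w) x y" using b by (simp add: bef_filter)
      then have "bef w' x y" using fP by (simp add: bef_filter)
      then show False using bef_asym[OF dw(2)] b(2) by blast
    qed
    moreover have "\<not> (t \<le> x \<and> t \<le> y)"
    proof
      assume h: "t \<le> x \<and> t \<le> y"
      then have "bef (filter (\<lambda>x. t \<le> x) w) x y" using b by (simp add: bef_filter)
      then have "bef w' x y" using fQ by (simp add: bef_filter)
      then show False using bef_asym[OF dw(2)] b(2) by blast
    qed
    ultimately show "Sw x y" unfolding Sw_def using t1 by auto
  qed
  then show ?thesis using w unfolding Q_def by blast
qed

lemma edgeA:
  assumes u: "U@[a,b]@V \<in> perms m" and ab: "a < b" and e: "(U@[a,b]@V, U@[b,a]@V) \<in> R"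
  shows "(phi1 (U@[a,b]@V), phi1 (U@[b,a]@V)) \<in> A"
proof (cases "b \<le> s")
  case True
  define L where "L = {x\<in>{a<..<b}. x \<in> set U}"
  have fR: "(a,b,L) \<in> fences_of m R" unfolding L_def using uniform[OF R u ab e] .
  have a1: "1 \<le> a" using u by (auto simp: perms_def)
  have Lsub: "L \<subseteq> {a<..<b}" unfolding L_def by auto
  have fA: "(a,b,L) \<in> fences_of s A" using H2[OF a1 ab True Lsub] fR by simp
  have p: "filter (\<lambda>x. x \<le> s) U @ [a,b] @ filter (\<lambda>x. x \<le> s) V \<in> perms s"
    using phi1_perm[OF u] True ab unfolding phi1_def by simp
  have "L = {x\<in>{a<..<b}. x \<in> set (filter (\<lambda>x. x \<le> s) U)}" unfolding L_def using True by auto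
  from edge_in_fence[OF fA p this] show ?thesis unfolding phi1_def using True ab by simp
next
  case False
  then have "phi1 (U@[a,b]@V) = phi1 (U@[b,a]@V)" unfolding phi1_def by simp
  then show ?thesis using cong_refl[OF A phi1_perm[OF u]] by simp
qed

lemma edgeB:
  assumes u: "U@[a,b]@V \<in> perms m" and ab: "a < b" and e: "(U@[a,b]@V, U@[b,a]@V) \<in> R"
  shows "(phi2 (U@[a,b]@V), phi2 (U@[b,a]@V)) \<in> B"
proof (cases "t \<le> a")
  case True
  define L where "L = {x\<in>{a<..<b}. x \<in> set U}"
  have fR: "(a,b,L) \<in> fences_of m R" unfolding L_def using uniform[OF R u ab e] .
  have bm: "b \<le> m" using u by (auto simp: perms_def)
  define g where "g x = x - (t-1)" for x :: nat
  define L' where "L' = g ` L"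
  have sh: "shift_fence (t-1) (g a, g b, L') = (a,b,L)"
  proof -
    have "(\<lambda>x. x + (t-1)) ` L' = L" unfolding L'_def g_def image_image
    proof -
      have "\<forall>x\<in>L. x - (t-1) + (t-1) = x" using True unfolding L_def by auto
      then show "(\<lambda>x. x - (t-1) + (t-1)) ` L = L" by (simp add: image_cong)
    qed
    moreover have "a - (t-1) + (t-1) = a" "b - (t-1) + (t-1) = b" using True ab t1 by auto
    ultimately show ?thesis unfolding shift_fence_def g_def by simp
  qed
  have L'sub: "L' \<subseteq> {g a<..<g b}" unfolding L'_def L_def g_def using True t1 by auto
  have fB: "(g a, g b, L') \<in> fences_of k B"
    using H3[of "g a" "g b" L'] L'sub sh fR True ab bm t1 unfolding g_def by auto
  have p: "map g (filter (\<lambda>x. t \<le> x) U) @ [g a, g b] @ map g (filter (\<lambda>x. t \<le> x) V) \<in> perms k"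
    using phi2_perm[OF u] True ab unfolding phi2_def g_def by simp
  have "L' = {x\<in>{g a<..<g b}. x \<in> set (map g (filter (\<lambda>x. t \<le> x) U))}"
  proof
    show "L' \<subseteq> {x\<in>{g a<..<g b}. x \<in> set (map g (filter (\<lambda>x. t \<le> x) U))}"
      using L'sub True unfolding L'_def L_def by auto
    show "{x\<in>{g a<..<g b}. x \<in> set (map g (filter (\<lambda>x. t \<le> x) U))} \<subseteq> L'"
    proof
      fix x assume "x \<in> {x\<in>{g a<..<g b}. x \<in> set (map g (filter (\<lambda>x. t \<le> x) U))}"
      then obtain y where y: "x = g y" "y \<in> set U" "t \<le> y" "g a < g y" "g y < g b" by auto
      have "a < y" using True y(3,4) t1 unfolding g_def by arith
      moreover have "y < b" using True y(3,5) t1 unfolding g_def by arith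
      ultimately show "x \<in> L'" unfolding L'_def L_def using y by auto
    qed
  qed
  from edge_in_fence[OF fB p this] show ?thesis unfolding phi2_def g_def using True ab by simp
next
  case False
  then have "phi2 (U@[a,b]@V) = phi2 (U@[b,a]@V)" unfolding phi2_def by simp
  then show ?thesis using cong_refl[OF B phi2_perm[OF u]] by simp
qed

lemma R_imp:
  assumes "(w,w') \<in> R"
  shows "(phi1 w, phi1 w') \<in> A \<and> (phi2 w, phi2 w') \<in> B"
proof -
  have "(w,w') \<in> (CE R)\<^sup>*" using connected[OF R assms] .
  then show ?thesis
  proof (induction rule: rtrancl_induct)
    case base
    have "w \<in> perms m" using cong_perms[OF R assms] by blast
    then show ?case using cong_refl[OF A phi1_perm] cong_refl[OF B phi2_perm] by blast
  next
    case (step u v)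
    have uv: "(u,v) \<in> R" "cover u v \<or> cover v u" using step.hyps(2) unfolding CE_def by auto
    have "(phi1 u, phi1 v) \<in> A \<and> (phi2 u, phi2 v) \<in> B"
    proof (cases "cover u v")
      case True
      then obtain U a b V where d: "a < b" "u = U@[a,b]@V" "v = U@[b,a]@V" unfolding cover_def by blast
      have "u \<in> perms m" using cong_perms[OF R uv(1)] by blast
      then show ?thesis using edgeA edgeB d uv(1) by blast
    next
      case False
      then obtain U a b V where d: "a < b" "v = U@[a,b]@V" "u = U@[b,a]@V" using uv unfolding cover_def by blast
      have vu: "(v,u) \<in> R" using cong_sym[OF R uv(1)] .
      have "v \<in> perms m" using cong_perms[OF R uv(1)] by blast
      then have "(phi1 v, phi1 u) \<in> A \<and> (phi2 v, phi2 u) \<in> B" using edgeA edgeB d vu by blast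
      then show ?thesis using cong_sym[OF A] cong_sym[OF B] by blast
    qed
    then show ?case using step.IH cong_trans[OF A] cong_trans[OF B] by blast
  qed
qed

lemma phi1_XpY: "p \<in> perms s \<Longrightarrow> \<forall>x\<in>set X \<union> set Y. s < x \<Longrightarrow> phi1 (X@p@Y) = p"
proof -
  assume p: "p \<in> perms s" and XY: "\<forall>x\<in>set X \<union> set Y. s < x"
  have "\<forall>x\<in>set X. s < x" "\<forall>x\<in>set Y. s < x" using XY by auto
  then have "filter (\<lambda>x. x \<le> s) X = []" "filter (\<lambda>x. x \<le> s) Y = []" by (auto simp: filter_empty_conv)
  moreover have "filter (\<lambda>x. x \<le> s) p = p" using p by (auto simp: perms_def)
  ultimately show ?thesis unfolding phi1_def by simp
qed

lemma phi2_shift: "phi2 (X@map (\<lambda>x. x + (t-1)) q@Y) = q" if "\<forall>x\<in>set X \<union> set Y. x < t" "q \<in> perms k"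
proof -
  have "\<forall>x\<in>set X. x < t" "\<forall>x\<in>set Y. x < t" using that by auto
  then have "filter (\<lambda>x. t \<le> x) X = []" "filter (\<lambda>x. t \<le> x) Y = []" by (auto simp: filter_empty_conv)
  moreover have "filter (\<lambda>x. t \<le> x) (map (\<lambda>x. x + (t-1)) q) = map (\<lambda>x. x + (t-1)) q"
  proof (rule filter_True)
    have "\<forall>x\<in>set q. 1 \<le> x" using that(2) by (auto simp: perms_def)
    then show "\<forall>x\<in>set (map (\<lambda>x. x + (t-1)) q). t \<le> x" using t1 by auto
  qed
  ultimately show ?thesis unfolding phi2_def by (simp add: map_idI)
qed

lemma phi2_of: "filter (\<lambda>x. t \<le> x) w = map (\<lambda>x. x + (t-1)) q \<Longrightarrow> phi2 w = q"
  unfolding phi2_def by (simp add: map_idI)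

lemma liftA_edge:
  assumes p: "P1@[a,b]@P2 \<in> perms s" and ab: "a < b" and e: "(P1@[a,b]@P2, P1@[b,a]@P2) \<in> A"
    and w: "X@(P1@[a,b]@P2)@Y \<in> perms m" and XY: "\<forall>x\<in>set X \<union> set Y. s < x"
  shows "(X@(P1@[a,b]@P2)@Y, X@(P1@[b,a]@P2)@Y) \<in> R"
proof -
  define L where "L = {x\<in>{a<..<b}. x \<in> set P1}"
  have fA: "(a,b,L) \<in> fences_of s A" unfolding L_def using uniform[OF A p ab e] .
  have ab1: "1 \<le> a" "b \<le> s" using p by (auto simp: perms_def)
  have Lsub: "L \<subseteq> {a<..<b}" unfolding L_def by auto
  have fR: "(a,b,L) \<in> fences_of m R" using H2[OF ab1(1) ab ab1(2) Lsub] fA by simp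
  have w': "(X@P1)@[a,b]@(P2@Y) \<in> perms m" using w by simp
  have Xs: "\<And>x. x \<in> set X \<Longrightarrow> s < x" using XY by simp
  have "L = {x\<in>{a<..<b}. x \<in> set (X@P1)}" unfolding L_def using Xs ab1 by fastforce
  from edge_in_fence[OF fR w' this] show ?thesis by simp
qed

lemma liftB_edge:
  assumes q: "Q1@[a,b]@Q2 \<in> perms k" and ab: "a < b" and e: "(Q1@[a,b]@Q2, Q1@[b,a]@Q2) \<in> B"
    and w: "X@map (\<lambda>x. x + (t-1)) (Q1@[a,b]@Q2)@Y \<in> perms m" and XY: "\<forall>x\<in>set X \<union> set Y. x < t"
  shows "(X@map (\<lambda>x. x + (t-1)) (Q1@[a,b]@Q2)@Y, X@map (\<lambda>x. x + (t-1)) (Q1@[b,a]@Q2)@Y) \<in> R"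
proof -
  define L where "L = {x\<in>{a<..<b}. x \<in> set Q1}"
  have fB: "(a,b,L) \<in> fences_of k B" unfolding L_def using uniform[OF B q ab e] .
  have ab1: "1 \<le> a" "b \<le> k" using q by (auto simp: perms_def)
  have Lsub: "L \<subseteq> {a<..<b}" unfolding L_def by auto
  have fR: "shift_fence (t-1) (a,b,L) \<in> fences_of m R" using H3[OF ab1(1) ab ab1(2) Lsub] fB by simp
  define sh where "sh x = x + (t-1)" for x :: nat
  have fR': "(sh a, sh b, sh ` L) \<in> fences_of m R" using fR unfolding shift_fence_def sh_def by simp
  have w': "(X@map sh Q1)@[sh a, sh b]@(map sh Q2@Y) \<in> perms m" using w unfolding sh_def by simp
  have "sh ` L = {x\<in>{sh a<..<sh b}. x \<in> set (X@map sh Q1)}"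
  proof
    show "sh ` L \<subseteq> {x\<in>{sh a<..<sh b}. x \<in> set (X@map sh Q1)}" unfolding L_def sh_def by auto
    show "{x\<in>{sh a<..<sh b}. x \<in> set (X@map sh Q1)} \<subseteq> sh ` L"
    proof
      fix x assume x: "x \<in> {x\<in>{sh a<..<sh b}. x \<in> set (X@map sh Q1)}"
      have Xs: "\<And>x. x \<in> set X \<Longrightarrow> x < t" using XY by simp
      have "t \<le> sh a" unfolding sh_def using ab1 by simp
      then have "x \<notin> set X" using x Xs by fastforce
      then obtain y where "y \<in> set Q1" "x = sh y" using x by auto
      then show "x \<in> sh ` L" using x unfolding L_def sh_def by auto
    qed
  qed
  from edge_in_fence[OF fR' w' this] show ?thesis unfolding sh_def by simp
qed

lemma liftA:
  assumes pp: "(p,p'') \<in> CE A" and w: "w \<in> perms m" "phi1 w = p"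
  shows "\<exists>w'\<in>perms m. (w,w') \<in> R \<and> phi1 w' = p'' \<and> phi2 w' = phi2 w"
proof -
  have pr: "(p,p'') \<in> A" "cover p p'' \<or> cover p'' p" using pp unfolding CE_def by auto
  have pp2: "p \<in> perms s" "p'' \<in> perms s" using cong_perms[OF A pr(1)] by auto
  obtain X Y where XY: "X@p''@Y \<in> perms m" "filter (\<lambda>x. t \<le> x) (X@p''@Y) = map (\<lambda>x. x + (t-1)) (phi2 w)"
    "\<forall>x\<in>set X \<union> set Y. s < x" using GA[OF pp2(2) phi2_perm[OF w(1)]] by blast
  have sp: "set p = set p''" using pp2 by (simp add: perms_def)
  have w0: "X@p@Y \<in> perms m" using XY(1) sp pp2 by (auto simp: perms_def)
  have key: "(X@p@Y, X@p''@Y) \<in> R \<and> filter (\<lambda>x. t \<le> x) p = filter (\<lambda>x. t \<le> x) p''"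
  proof (cases "cover p p''")
    case True
    then obtain P1 a b P2 where d: "a < b" "p = P1@[a,b]@P2" "p'' = P1@[b,a]@P2" unfolding cover_def by blast
    have "b \<le> s" using pp2 d by (auto simp: perms_def)
    then have "a < t" using d t1 by simp
    then have "filter (\<lambda>x. t \<le> x) p = filter (\<lambda>x. t \<le> x) p''" using d by simp
    then show ?thesis using liftA_edge[of P1 a b P2 X Y] d pp2 pr(1) w0 XY(3) by simp
  next
    case False
    then obtain P1 a b P2 where d: "a < b" "p'' = P1@[a,b]@P2" "p = P1@[b,a]@P2" using pr unfolding cover_def by blast
    have "b \<le> s" using pp2 d by (auto simp: perms_def)
    then have "a < t" using d t1 by simp
    then have "filter (\<lambda>x. t \<le> x) p = filter (\<lambda>x. t \<le> x) p''" using d by simp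
    moreover have "(X@p''@Y, X@p@Y) \<in> R"
      using liftA_edge[of P1 a b P2 X Y] d pp2 cong_sym[OF A pr(1)] XY(1,3) by simp
    ultimately show ?thesis using cong_sym[OF R] by blast
  qed
  have f1: "phi1 (X@p@Y) = p" "phi1 (X@p''@Y) = p''" using phi1_XpY XY(3) pp2 by auto
  have f2: "phi2 (X@p''@Y) = phi2 w" using phi2_of XY(2) .
  have "filter (\<lambda>x. t \<le> x) (X@p@Y) = filter (\<lambda>x. t \<le> x) (X@p''@Y)" using key by simp
  then have f3: "phi2 (X@p@Y) = phi2 w" using f2 unfolding phi2_def by simp
  have "(w, X@p@Y) \<in> R" using same_phi[OF w(1) w0] f1 f3 w(2) by simp
  then have "(w, X@p''@Y) \<in> R" using key cong_trans[OF R] by blast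
  then show ?thesis using XY(1) f1 f2 by blast
qed

lemma liftB:
  assumes qq: "(q,q'') \<in> CE B" and w: "w \<in> perms m" "phi2 w = q"
  shows "\<exists>w'\<in>perms m. (w,w') \<in> R \<and> phi2 w' = q'' \<and> phi1 w' = phi1 w"
proof -
  define sh where "sh x = x + (t-1)" for x :: nat
  have qr: "(q,q'') \<in> B" "cover q q'' \<or> cover q'' q" using qq unfolding CE_def by auto
  have qq2: "q \<in> perms k" "q'' \<in> perms k" using cong_perms[OF B qr(1)] by auto
  obtain X Y where XY: "X@map sh q''@Y \<in> perms m" "filter (\<lambda>x. x \<le> s) (X@map sh q''@Y) = phi1 w"
    "\<forall>x\<in>set X \<union> set Y. x < t" using GB[OF phi1_perm[OF w(1)] qq2(2)] unfolding sh_def by blast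
  have sq: "set q = set q''" using qq2 by (simp add: perms_def)
  have w0: "X@map sh q@Y \<in> perms m"
  proof -
    have "inj_on sh (set q)" unfolding sh_def by (simp add: inj_on_def)
    then have "distinct (map sh q)" using qq2 by (simp add: perms_def distinct_map)
    moreover have "set (map sh q) = set (map sh q'')" using sq by simp
    ultimately show ?thesis using XY(1) by (auto simp: perms_def)
  qed
  have key: "(X@map sh q@Y, X@map sh q''@Y) \<in> R \<and> filter (\<lambda>x. x \<le> s) (map sh q) = filter (\<lambda>x. x \<le> s) (map sh q'')"
  proof (cases "cover q q''")
    case True
    then obtain Q1 a b Q2 where d: "a < b" "q = Q1@[a,b]@Q2" "q'' = Q1@[b,a]@Q2" unfolding cover_def by blast
    have "1 \<le> a" using qq2 d by (auto simp: perms_def)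
    then have "s < sh b" using d t1 unfolding sh_def by simp
    then have "filter (\<lambda>x. x \<le> s) (map sh q) = filter (\<lambda>x. x \<le> s) (map sh q'')" using d by simp
    then show ?thesis using liftB_edge[of Q1 a b Q2 X Y] d qq2 qr(1) w0 XY(3) unfolding sh_def by simp
  next
    case False
    then obtain Q1 a b Q2 where d: "a < b" "q'' = Q1@[a,b]@Q2" "q = Q1@[b,a]@Q2" using qr unfolding cover_def by blast
    have "1 \<le> a" using qq2 d by (auto simp: perms_def)
    then have "s < sh b" using d t1 unfolding sh_def by simp
    then have "filter (\<lambda>x. x \<le> s) (map sh q) = filter (\<lambda>x. x \<le> s) (map sh q'')" using d by simp
    moreover have "(X@map sh q''@Y, X@map sh q@Y) \<in> R"
      using liftB_edge[of Q1 a b Q2 X Y] d qq2 cong_sym[OF B qr(1)] XY(1,3) unfolding sh_def by simp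
    ultimately show ?thesis using cong_sym[OF R] by blast
  qed
  have f1: "phi2 (X@map sh q@Y) = q" "phi2 (X@map sh q''@Y) = q''"
    using phi2_shift XY(3) qq2 unfolding sh_def by auto
  have f2: "phi1 (X@map sh q''@Y) = phi1 w" using XY(2) unfolding phi1_def .
  have "filter (\<lambda>x. x \<le> s) (X@map sh q@Y) = filter (\<lambda>x. x \<le> s) (X@map sh q''@Y)" using key by simp
  then have f3: "phi1 (X@map sh q@Y) = phi1 w" using f2 unfolding phi1_def by simp
  have "(w, X@map sh q@Y) \<in> R" using same_phi[OF w(1) w0] f1 f3 w(2) by simp
  then have "(w, X@map sh q''@Y) \<in> R" using key cong_trans[OF R] by blast
  then show ?thesis using XY(1) f1 f2 by blast
qed

lemma R_from:
  assumes w: "w \<in> perms m" "w' \<in> perms m" and a: "(phi1 w, phi1 w') \<in> A" and b: "(phi2 w, phi2 w') \<in> B"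
  shows "(w,w') \<in> R"
proof -
  have "(phi1 w, phi1 w') \<in> (CE A)\<^sup>*" using connected[OF A a] .
  then have "\<exists>w1\<in>perms m. (w,w1) \<in> R \<and> phi1 w1 = phi1 w' \<and> phi2 w1 = phi2 w"
  proof (induction rule: rtrancl_induct)
    case base then show ?case using w(1) cong_refl[OF R] by blast
  next
    case (step p p'')
    then obtain w1 where w1: "w1 \<in> perms m" "(w,w1) \<in> R" "phi1 w1 = p" "phi2 w1 = phi2 w" by blast
    then obtain w2 where "w2 \<in> perms m" "(w1,w2) \<in> R" "phi1 w2 = p''" "phi2 w2 = phi2 w1"
      using liftA[OF step.hyps(2) w1(1) w1(3)] by blast
    then show ?case using w1 cong_trans[OF R] by auto
  qed
  then obtain w1 where w1: "w1 \<in> perms m" "(w,w1) \<in> R" "phi1 w1 = phi1 w'" "phi2 w1 = phi2 w" by blast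
  have "(phi2 w1, phi2 w') \<in> (CE B)\<^sup>*" using connected[OF B] b w1(4) by simp
  then have "\<exists>w2\<in>perms m. (w1,w2) \<in> R \<and> phi2 w2 = phi2 w' \<and> phi1 w2 = phi1 w1"
  proof (induction rule: rtrancl_induct)
    case base then show ?case using w1(1) cong_refl[OF R] by blast
  next
    case (step q q'')
    then obtain w2 where w2: "w2 \<in> perms m" "(w1,w2) \<in> R" "phi2 w2 = q" "phi1 w2 = phi1 w1" by blast
    then obtain w3 where "w3 \<in> perms m" "(w2,w3) \<in> R" "phi2 w3 = q''" "phi1 w3 = phi1 w2"
      using liftB[OF step.hyps(2) w2(1) w2(3)] by blast
    then show ?case using w2 cong_trans[OF R] by auto
  qed
  then obtain w2 where w2: "w2 \<in> perms m" "(w1,w2) \<in> R" "phi2 w2 = phi2 w'" "phi1 w2 = phi1 w1" by blast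
  have "(w2,w') \<in> R" using same_phi[OF w2(1) w(2)] w2 w1 by simp
  then show ?thesis using w1(2) w2(2) cong_trans[OF R] by blast
qed

theorem iso: "order_iso (quot m R) quot_le (quot s A \<times> quot k B) (prod_le quot_le quot_le)"
proof (rule iso_abstract[where phiA = phi1 and phiB = phi2])
  show "equiv (perms m) R" "equiv (perms s) A" "equiv (perms k) B" using R A B cong_equiv by auto
  show "\<And>w. w \<in> perms m \<Longrightarrow> phi1 w \<in> perms s \<and> phi2 w \<in> perms k" using phi1_perm phi2_perm by blast
  show "\<And>x y. x \<in> perms m \<Longrightarrow> y \<in> perms m \<Longrightarrow> (x,y) \<in> R \<longleftrightarrow> (phi1 x, phi1 y) \<in> A \<and> (phi2 x, phi2 y) \<in> B"
    using R_imp R_from by blast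
  show "\<And>p q. p \<in> perms s \<Longrightarrow> q \<in> perms k \<Longrightarrow> \<exists>w\<in>perms m. phi1 w = p \<and> phi2 w = q"
  proof -
    fix p q assume pq: "p \<in> perms s" "q \<in> perms k"
    obtain X Y where XY: "X@p@Y \<in> perms m" "filter (\<lambda>x. t \<le> x) (X@p@Y) = map (\<lambda>x. x + (t-1)) q"
      "\<forall>x\<in>set X \<union> set Y. s < x" using GA[OF pq] by blast
    then show "\<exists>w\<in>perms m. phi1 w = p \<and> phi2 w = q" using phi1_XpY[OF pq(1) XY(3)] phi2_of[OF XY(2)] by blast
  qed
  show "\<And>x y. x \<in> perms m \<Longrightarrow> y \<in> perms m \<Longrightarrow> weak_le x y \<Longrightarrow> weak_le (phi1 x) (phi1 y) \<and> weak_le (phi2 x) (phi2 y)"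
    using phi_mono by blast
  show "\<And>p p' q q'. p \<in> perms s \<Longrightarrow> p' \<in> perms s \<Longrightarrow> q \<in> perms k \<Longrightarrow> q' \<in> perms k \<Longrightarrow>
      weak_le p p' \<Longrightarrow> weak_le q q' \<Longrightarrow>
      \<exists>w w'. w \<in> perms m \<and> w' \<in> perms m \<and> phi1 w = p \<and> phi2 w = q \<and> phi1 w' = p' \<and> phi2 w' = q' \<and> weak_le w w'"
    using G2 unfolding phi1_def phi2_def by blast
qed

end


lemma map_add_mono: "weak_le q q' \<Longrightarrow> weak_le (map (\<lambda>x. x + c) q) (map (\<lambda>x. x + c) q')"
  unfolding weak_le_def
proof
  fix e assume q: "inversions q \<subseteq> inversions q'" and e: "e \<in> inversions (map (\<lambda>x. x + c) q)"
  obtain a b where ab: "e = (a,b)" by (cases e)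
  then have h: "a < b" "bef (map (\<lambda>x. x + c) q) b a" using e unfolding inv_bef by auto
  then obtain x y where xy: "b = x + c" "a = y + c" "bef q x y" unfolding bef_map by blast
  then have "(y,x) \<in> inversions q" using h unfolding inv_bef by auto
  then have "bef q' x y" using q unfolding inv_bef by auto
  then have "bef (map (\<lambda>x. x + c) q') b a" unfolding bef_map using xy by blast
  then show "e \<in> inversions (map (\<lambda>x. x + c) q')" using h ab unfolding inv_bef by auto
qed

lemma inv_append_sep:
  assumes "\<forall>x\<in>set P. \<forall>y\<in>set Q. x < y"
  shows "inversions (P@Q) = inversions P \<union> inversions Q"
proof -
  have "bef (P@Q) b a \<longleftrightarrow> bef P b a \<or> bef Q b a" if "a < b" for a b
  proof -
    have "\<not> (b \<in> set P \<and> a \<in> set Q)" using assms that by (meson less_asym)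
    then show ?thesis by (auto simp: bef_append)
  qed
  then show ?thesis unfolding inv_bef by auto
qed

lemma perms_shift: "q \<in> perms k \<Longrightarrow> set (map (\<lambda>x. x + c) q) = {c+1..c+k} \<and> distinct (map (\<lambda>x. x + c) q)"
proof -
  assume q: "q \<in> perms k"
  have "set (map (\<lambda>x. x + c) q) = (\<lambda>x. x + c) ` {1..k}" using q by (simp add: perms_def)
  also have "\<dots> = {c+1..c+k}"
  proof
    show "(\<lambda>x. x + c) ` {1..k} \<subseteq> {c+1..c+k}" by auto
    show "{c+1..c+k} \<subseteq> (\<lambda>x. x + c) ` {1..k}"
    proof
      fix y assume "y \<in> {c+1..c+k}"
      then have "y - c \<in> {1..k}" "y = (y - c) + c" by auto
      then show "y \<in> (\<lambda>x. x + c) ` {1..k}" by blast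
    qed
  qed
  finally show ?thesis using q by (simp add: perms_def distinct_map inj_on_def)
qed

lemma part1:
  fixes n s :: nat and R A B :: "(nat list \<times> nat list) set"
  assumes "n \<ge> 2" and s1: "1 \<le> s" and sn: "s \<le> n"
    and R: "lattice_cong (n+1) R"
    and fs: "(s, s+1, {}) \<in> fences_of (n+1) R"
    and A: "lattice_cong s A"
    and FA: "fences_of s A = {(a,b,L) \<in> fences_of (n+1) R. 1 \<le> a \<and> a < b \<and> b \<le> s}"
    and B: "lattice_cong (n+1-s) B"
    and FB: "fences_of (n+1-s) B =
           unshift_fence s ` {(a,b,L) \<in> fences_of (n+1) R. s+1 \<le> a \<and> a < b \<and> b \<le> n+1}"
  shows "order_iso (quot (n+1) R) quot_le (quot s A \<times> quot (n+1-s) B) (prod_le quot_le quot_le)"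
proof -
  define sh where "sh x = x + s" for x :: nat
  have k: "n + 1 + 1 - Suc s = n + 1 - s" using sn by simp
  interpret prodset "n+1" s "Suc s" R A B
  proof (unfold_locales)
    show "1 \<le> s" "s \<le> n+1" "Suc s = s \<or> Suc s = Suc s" "Suc s \<le> n+1" using s1 sn by auto
    show "lattice_cong (n+1) R" "lattice_cong s A" by (rule R, rule A)
    show "lattice_cong (n+1+1 - Suc s) B" using B k by simp
  next
    fix U c d V assume p: "U@[c,d]@V \<in> perms (n+1)" and c: "c < Suc s" and d: "s < d"
    define L where "L = {x\<in>{c<..<d}. x \<in> set U}"
    have "1 \<le> c" "d \<le> n+1" using p by (auto simp: perms_def)
    then have "is_fence (n+1) (c,d,L)" using c d unfolding is_fence_def L_def by auto
    then have "(c,d,L) \<in> fences_of (n+1) R" using crossing[OF R] fs c d by simp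
    then show "(U@[c,d]@V, U@[d,c]@V) \<in> R" using edge_in_fence p L_def by blast
  next
    fix a b L assume h: "1 \<le> a" "a < b" "b \<le> s" "L \<subseteq> {a<..<b}"
    show "(a,b,L) \<in> fences_of s A \<longleftrightarrow> (a,b,L) \<in> fences_of (n+1) R" using FA h by auto
  next
    fix a b L assume h: "1 \<le> a" "a < b" "b \<le> n+1+1 - Suc s" "L \<subseteq> {a<..<b}"
    have shf: "shift_fence (Suc s - 1) (a,b,L) = (a+s, b+s, sh ` L)" unfolding shift_fence_def sh_def by simp
    have un: "unshift_fence s (a+s, b+s, sh ` L) = (a,b,L)"
      unfolding unshift_fence_def sh_def by (simp add: image_image)
    show "(a,b,L) \<in> fences_of (n+1+1 - Suc s) B \<longleftrightarrow> shift_fence (Suc s - 1) (a,b,L) \<in> fences_of (n+1) R"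
    proof
      assume "(a,b,L) \<in> fences_of (n+1+1 - Suc s) B"
      then have "(a,b,L) \<in> unshift_fence s ` {(a,b,L) \<in> fences_of (n+1) R. s+1 \<le> a \<and> a < b \<and> b \<le> n+1}"
        using FB k by simp
      then obtain a0 b0 L0 where g: "(a0,b0,L0) \<in> fences_of (n+1) R" "s+1 \<le> a0" "a0 < b0"
        "(a,b,L) = unshift_fence s (a0,b0,L0)" by auto
      have L0: "L0 \<subseteq> {a0<..<b0}" using g(1) by (auto simp: fences_of_def is_fence_def)
      have "a0 = a + s" "b0 = b + s" using g unfolding unshift_fence_def by auto
      moreover have "sh ` L = L0"
      proof -
        have "L = (\<lambda>x. x - s) ` L0" using g unfolding unshift_fence_def by auto
        then have "sh ` L = (\<lambda>x. x - s + s) ` L0" unfolding sh_def by (simp add: image_image)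
        also have "\<dots> = L0"
        proof -
          have "\<forall>x\<in>L0. x - s + s = x" using L0 g(2) by auto
          then show ?thesis by (simp add: image_cong)
        qed
        finally show ?thesis .
      qed
      ultimately show "shift_fence (Suc s - 1) (a,b,L) \<in> fences_of (n+1) R" using shf g(1) by simp
    next
      assume "shift_fence (Suc s - 1) (a,b,L) \<in> fences_of (n+1) R"
      then have "(a+s, b+s, sh ` L) \<in> {(a,b,L) \<in> fences_of (n+1) R. s+1 \<le> a \<and> a < b \<and> b \<le> n+1}"
        using shf h by (auto simp: fences_of_def is_fence_def)
      then have "unshift_fence s (a+s, b+s, sh ` L) \<in> unshift_fence s ` {(a,b,L) \<in> fences_of (n+1) R. s+1 \<le> a \<and> a < b \<and> b \<le> n+1}"
        by (rule imageI)
      then have "(a,b,L) \<in> fences_of (n+1-s) B" unfolding FB un .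
      then show "(a,b,L) \<in> fences_of (n+1+1 - Suc s) B" using k by simp
    qed
  next
    fix p q assume p: "p \<in> perms s" and q: "q \<in> perms (n+1+1 - Suc s)"
    have q': "set (map sh q) = {s+1..n+1}" "distinct (map sh q)" using perms_shift[OF q, of s] sn
      unfolding sh_def by auto
    have sp: "set p = {1..s}" "distinct p" using p by (auto simp: perms_def)
    have w: "[]@p@map sh q \<in> perms (n+1)" using q' sp sn unfolding perms_def by auto
    have "filter (\<lambda>x. Suc s \<le> x) ([]@p@map sh q) = map sh q"
      using q' sp by (auto intro!: filter_True simp: filter_empty_conv)
    moreover have "\<forall>x\<in>set [] \<union> set (map sh q). s < x" using q' by auto
    ultimately show "\<exists>X Y. X@p@Y \<in> perms (n+1) \<and> filter (\<lambda>x. Suc s \<le> x) (X@p@Y) = map (\<lambda>x. x + (Suc s - 1)) q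
                 \<and> (\<forall>x\<in>set X \<union> set Y. s < x)" using w unfolding sh_def
      by (intro exI[of _ "[]"] exI[of _ "map (\<lambda>x. x + s) q"]) simp
  next
    fix p q assume p: "p \<in> perms s" and q: "q \<in> perms (n+1+1 - Suc s)"
    have q': "set (map sh q) = {s+1..n+1}" "distinct (map sh q)" using perms_shift[OF q, of s] sn
      unfolding sh_def by auto
    have sp: "set p = {1..s}" "distinct p" using p by (auto simp: perms_def)
    have w: "p@map sh q@[] \<in> perms (n+1)" using q' sp sn unfolding perms_def by auto
    have "filter (\<lambda>x. x \<le> s) (p@map sh q@[]) = p"
      using q' sp by (auto intro!: filter_True simp: filter_empty_conv)
    moreover have "\<forall>x\<in>set p \<union> set []. x < Suc s" using sp by auto
    ultimately show "\<exists>X Y. X@map (\<lambda>x. x + (Suc s - 1)) q@Y \<in> perms (n+1) \<and>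
        filter (\<lambda>x. x \<le> s) (X@map (\<lambda>x. x + (Suc s - 1)) q@Y) = p \<and> (\<forall>x\<in>set X \<union> set Y. x < Suc s)"
      using w unfolding sh_def by (intro exI[of _ p] exI[of _ "[]"]) simp
  next
    fix p p' q q' assume pp: "p \<in> perms s" "p' \<in> perms s" and qq: "q \<in> perms (n+1+1 - Suc s)" "q' \<in> perms (n+1+1 - Suc s)"
      and le: "weak_le p p'" "weak_le q q'"
    have aux: "x \<in> perms s \<Longrightarrow> y \<in> perms (n+1+1 - Suc s) \<Longrightarrow>
      x@map sh y \<in> perms (n+1) \<and> filter (\<lambda>z. z \<le> s) (x@map sh y) = x \<and>
      map (\<lambda>z. z - (Suc s - 1)) (filter (\<lambda>z. Suc s \<le> z) (x@map sh y)) = y \<and>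
      inversions (x@map sh y) = inversions x \<union> inversions (map sh y)" for x y
    proof -
      assume x: "x \<in> perms s" and y: "y \<in> perms (n+1+1 - Suc s)"
      have y': "set (map sh y) = {s+1..n+1}" "distinct (map sh y)" using perms_shift[OF y, of s] sn
        unfolding sh_def by auto
      have sx: "set x = {1..s}" "distinct x" using x by (auto simp: perms_def)
      have "x@map sh y \<in> perms (n+1)" using y' sx sn unfolding perms_def by auto
      moreover have "filter (\<lambda>z. z \<le> s) (x@map sh y) = x"
        using y' sx by (auto intro!: filter_True simp: filter_empty_conv)
      moreover have "filter (\<lambda>z. Suc s \<le> z) (x@map sh y) = map sh y"
        using y' sx by (auto intro!: filter_True simp: filter_empty_conv)
      then have "map (\<lambda>z. z - (Suc s - 1)) (filter (\<lambda>z. Suc s \<le> z) (x@map sh y)) = y"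
        unfolding sh_def by (simp add: map_idI)
      moreover have "inversions (x@map sh y) = inversions x \<union> inversions (map sh y)"
        by (rule inv_append_sep) (use sx y' in auto)
      ultimately show ?thesis by blast
    qed
    have "weak_le (p@map sh q) (p'@map sh q')"
      using aux[OF pp(1) qq(1)] aux[OF pp(2) qq(2)] le map_add_mono[OF le(2), of s]
      unfolding weak_le_def sh_def by auto
    then show "\<exists>w w'. w \<in> perms (n+1) \<and> w' \<in> perms (n+1) \<and> filter (\<lambda>x. x \<le> s) w = p
                 \<and> map (\<lambda>x. x - (Suc s - 1)) (filter (\<lambda>x. Suc s \<le> x) w) = q
                 \<and> filter (\<lambda>x. x \<le> s) w' = p' \<and> map (\<lambda>x. x - (Suc s - 1)) (filter (\<lambda>x. Suc s \<le> x) w') = q'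
                 \<and> weak_le w w'" using aux[OF pp(1) qq(1)] aux[OF pp(2) qq(2)] by blast
  qed
  show ?thesis using iso k by simp
qed



lemma split_low:
  fixes p :: "nat list"
  assumes "p \<in> perms s" "1 \<le> s"
  shows "\<exists>P1 P2. p = P1@s#P2 \<and> (\<forall>x\<in>set P1. x < s) \<and> (\<forall>x\<in>set P2. x < s)"
proof -
  have "s \<in> set p" using assms by (auto simp: perms_def)
  then obtain P1 P2 where d: "p = P1@s#P2" by (meson split_list)
  have "distinct p" "set p = {1..s}" using assms by (auto simp: perms_def)
  then have "\<forall>x\<in>set P1. x < s" "\<forall>x\<in>set P2. x < s" using d by fastforce+
  then show ?thesis using d by blast
qed

lemma split_high:
  fixes q :: "nat list"
  assumes "distinct q" "set q = {s..n}" "s \<le> n"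
  shows "\<exists>Q1 Q2. q = Q1@s#Q2 \<and> (\<forall>x\<in>set Q1. s < x) \<and> (\<forall>x\<in>set Q2. s < x)"
proof -
  have "s \<in> set q" using assms(2,3) by simp
  then obtain Q1 Q2 where d: "q = Q1@s#Q2" by (meson split_list)
  have "s \<notin> set Q1" "s \<notin> set Q2" using assms(1) d by auto
  moreover have "set Q1 \<subseteq> {s..n}" "set Q2 \<subseteq> {s..n}" using assms(2) d by auto
  ultimately have "\<forall>x\<in>set Q1. s < x" "\<forall>x\<in>set Q2. s < x" by (auto simp: le_less)
  then show ?thesis using d by blast
qed

lemma cross_bef:
  assumes "a \<in> set p" "a \<notin> set Q1" "a \<notin> set Q2" "b \<notin> set p"
  shows "bef (Q1@p@Q2) b a \<longleftrightarrow> b \<in> set Q1"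
proof -
  have "\<not> bef Q1 b a" "\<not> bef Q2 b a" "\<not> bef p b a" using assms bef_set by metis+
  then show ?thesis using assms by (auto simp: bef_append)
qed

lemma part2:
  fixes n s :: nat and R' A B :: "(nat list \<times> nat list) set"
  assumes s2: "2 \<le> s" and sn: "s \<le> n - 1"
    and A: "lattice_cong s A" and B: "lattice_cong (n+1-s) B" and R: "lattice_cong n R'"
    and F: "fences_of n R' = fences_of s A \<union> shift_fence (s-1) ` fences_of (n+1-s) B
                    \<union> fence_downset n {(s-1, s+1, {}), (s-1, s+1, {s})}"
  shows "order_iso (quot n R') quot_le (quot s A \<times> quot (n+1-s) B) (prod_le quot_le quot_le)"
proof -
  define sh where "sh x = x + (s - 1)" for x :: nat
  have sn': "s < n" using sn s2 by arith
  have hq: "q \<in> perms (n+1-s) \<Longrightarrow> set (map sh q) = {s..n} \<and> distinct (map sh q)" for q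
    using perms_shift[of q "n+1-s" "s-1"] sn' s2 unfolding sh_def by auto
  have hp: "p \<in> perms s \<Longrightarrow> set p = {1..s} \<and> distinct p" for p by (simp add: perms_def)
  have mergeA: "\<exists>X Y. X@p@Y \<in> perms n \<and> filter (\<lambda>x. s \<le> x) (X@p@Y) = map sh q
       \<and> filter (\<lambda>x. x \<le> s) (X@p@Y) = p \<and> (\<forall>x\<in>set X \<union> set Y. s < x)
       \<and> (\<forall>b a. a \<in> set p \<longrightarrow> a < s \<longrightarrow> s < b \<longrightarrow> (bef (X@p@Y) b a \<longleftrightarrow> bef (map sh q) b s))"
    if p: "p \<in> perms s" and q: "q \<in> perms (n+1-s)" for p q
  proof -
    obtain Q1 Q2 where Q: "map sh q = Q1@s#Q2" "\<forall>x\<in>set Q1. s < x" "\<forall>x\<in>set Q2. s < x"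
      using split_high[of "map sh q" s n] hq[OF q] sn' by auto
    obtain P1 P2 where P: "p = P1@s#P2" "\<forall>x\<in>set P1. x < s" "\<forall>x\<in>set P2. x < s"
      using split_low[OF p] s2 by auto
    have dq: "distinct (Q1@s#Q2)" "set (Q1@s#Q2) = {s..n}" using hq[OF q] Q(1) by auto
    have dp: "distinct p" "set p = {1..s}" using hp[OF p] by auto
    have "set (Q1@p@Q2) = {1..n}"
    proof -
      have e: "set (Q1@p@Q2) = (set (Q1@s#Q2) - {s}) \<union> set p" using dq Q P by auto
      have "(set (Q1@s#Q2) - {s}) \<union> set p = ({s..n} - {s}) \<union> {1..s}" using dq dp by simp
      also have "\<dots> = {1..n}" using sn' s2 by auto
      finally show ?thesis using e by simp
    qed
    moreover have "distinct (Q1@p@Q2)" using dq dp Q P by fastforce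
    ultimately have w: "Q1@p@Q2 \<in> perms n" by (simp add: perms_def)
    have f1: "filter (\<lambda>x. s \<le> x) (Q1@p@Q2) = map sh q"
    proof -
      have "filter (\<lambda>x. s \<le> x) Q1 = Q1" "filter (\<lambda>x. s \<le> x) Q2 = Q2" using Q by (auto intro!: filter_True)
      moreover have "filter (\<lambda>x. s \<le> x) P1 = []" "filter (\<lambda>x. s \<le> x) P2 = []"
        using P by (auto simp: filter_empty_conv)
      then have "filter (\<lambda>x. s \<le> x) p = [s]" using P by simp
      ultimately show ?thesis using Q by simp
    qed
    have f2: "filter (\<lambda>x. x \<le> s) (Q1@p@Q2) = p"
    proof -
      have "filter (\<lambda>x. x \<le> s) Q1 = []" "filter (\<lambda>x. x \<le> s) Q2 = []" using Q by (auto simp: filter_empty_conv)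
      moreover have "filter (\<lambda>x. x \<le> s) p = p" using dp by (auto intro!: filter_True)
      ultimately show ?thesis by simp
    qed
    have cr: "\<forall>b a. a \<in> set p \<longrightarrow> a < s \<longrightarrow> s < b \<longrightarrow> (bef (Q1@p@Q2) b a \<longleftrightarrow> bef (map sh q) b s)"
    proof (intro allI impI)
      fix b a assume h: "a \<in> set p" "a < s" "s < b"
      have "a \<notin> set Q1" "a \<notin> set Q2" "b \<notin> set p" using Q h dp by auto
      then have "bef (Q1@p@Q2) b a \<longleftrightarrow> b \<in> set Q1" using cross_bef[of a p Q1 Q2 b] h by blast
      moreover have "s \<notin> set Q1" "s \<notin> set Q2" "b \<notin> set [s]" using dq(1) h by auto
      then have "bef (Q1@[s]@Q2) b s \<longleftrightarrow> b \<in> set Q1"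
        using cross_bef[of s "[s]" Q1 Q2 b] by simp
      ultimately show "bef (Q1@p@Q2) b a \<longleftrightarrow> bef (map sh q) b s" using Q by simp
    qed
    show ?thesis using w f1 f2 Q cr by blast
  qed
  interpret prodset n s s R' A B
  proof (unfold_locales)
    show "1 \<le> s" "s \<le> n" "s = s \<or> s = Suc s" using s2 sn' by auto
    show "lattice_cong n R'" "lattice_cong s A" "lattice_cong (n+1-s) B" by (rule R, rule A, rule B)
  next
    fix U c d V assume p: "U@[c,d]@V \<in> perms n" and c: "c < s" and d: "s < d"
    define L where "L = {x\<in>{c<..<d}. x \<in> set U}"
    have cd: "1 \<le> c" "d \<le> n" using p by (auto simp: perms_def)
    then have fe: "is_fence n (c,d,L)" using c d unfolding is_fence_def L_def by auto
    define g where "g = (s-1, s+1, L \<inter> {s})"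
    have gG: "g \<in> {(s-1, s+1, {}), (s-1, s+1, {s})}" unfolding g_def by auto
    have "(c,d,L) = g \<or> forces (c,d,L) g"
    proof (cases "(c,d) = (s-1, s+1)")
      case True
      then have "L \<subseteq> {s}" unfolding L_def by auto
      then show ?thesis using True unfolding g_def by auto
    next
      case False
      have e: "{s-1<..<s+1} = {s}" using s2 by auto
      have "c \<le> s-1" "s-1 < s+1" "s+1 \<le> d" using c d by auto
      then have "forces (c,d,L) g" unfolding forces_def g_def using False e by simp
      then show ?thesis by blast
    qed
    then have "(c,d,L) \<in> fence_downset n {(s-1, s+1, {}), (s-1, s+1, {s})}"
      unfolding fence_downset_def using fe gG by blast
    then have "(c,d,L) \<in> fences_of n R'" using F by blast
    then show "(U@[c,d]@V, U@[d,c]@V) \<in> R'" using edge_in_fence p L_def by blast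
  next
    fix a b L assume h: "1 \<le> a" "a < b" "b \<le> s" "L \<subseteq> {a<..<b}"
    show "(a,b,L) \<in> fences_of s A \<longleftrightarrow> (a,b,L) \<in> fences_of n R'"
    proof
      assume "(a,b,L) \<in> fences_of s A" then show "(a,b,L) \<in> fences_of n R'" using F by blast
    next
      assume "(a,b,L) \<in> fences_of n R'"
      moreover have "(a,b,L) \<notin> shift_fence (s-1) ` fences_of (n+1-s) B"
      proof
        assume "(a,b,L) \<in> shift_fence (s-1) ` fences_of (n+1-s) B"
        then obtain a0 b0 L0 where "(a0,b0,L0) \<in> fences_of (n+1-s) B" "(a,b,L) = shift_fence (s-1) (a0,b0,L0)"
          by auto
        then have "1 \<le> a0" "a0 < b0" "b = b0 + (s-1)" by (auto simp: fences_of_def is_fence_def shift_fence_def)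
        then show False using h s2 by arith
      qed
      moreover have "(a,b,L) \<notin> fence_downset n {(s-1, s+1, {}), (s-1, s+1, {s})}"
        using h unfolding fence_downset_def forces_def by auto
      ultimately show "(a,b,L) \<in> fences_of s A" using F by blast
    qed
  next
    fix a b L assume h: "1 \<le> a" "a < b" "b \<le> n+1-s" "L \<subseteq> {a<..<b}"
    show "(a,b,L) \<in> fences_of (n+1-s) B \<longleftrightarrow> shift_fence (s-1) (a,b,L) \<in> fences_of n R'"
    proof
      assume "(a,b,L) \<in> fences_of (n+1-s) B" then show "shift_fence (s-1) (a,b,L) \<in> fences_of n R'"
        using F by blast
    next
      assume a: "shift_fence (s-1) (a,b,L) \<in> fences_of n R'"
      have e: "shift_fence (s-1) (a,b,L) = (a+(s-1), b+(s-1), (\<lambda>x. x + (s-1)) ` L)" by (simp add: shift_fence_def)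
      have n1: "shift_fence (s-1) (a,b,L) \<notin> fences_of s A"
        using h s2 unfolding e by (auto simp: fences_of_def is_fence_def)
      have n2: "shift_fence (s-1) (a,b,L) \<notin> fence_downset n {(s-1, s+1, {}), (s-1, s+1, {s})}"
        using h s2 unfolding e fence_downset_def forces_def by auto
      have "shift_fence (s-1) (a,b,L) \<in> shift_fence (s-1) ` fences_of (n+1-s) B" using a F n1 n2 by blast
      then obtain f where f: "f \<in> fences_of (n+1-s) B" "shift_fence (s-1) f = shift_fence (s-1) (a,b,L)" by auto
      obtain a0 b0 L0 where f0: "f = (a0,b0,L0)" by (cases f)
      have "a0 = a" "b0 = b" "(\<lambda>x. x + (s-1)) ` L0 = (\<lambda>x. x + (s-1)) ` L" using f(2) f0 by (auto simp: shift_fence_def)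
      moreover have "inj (\<lambda>x::nat. x + (s-1))" by (simp add: inj_on_def)
      ultimately have "f = (a,b,L)" using f0 by (simp add: inj_image_eq_iff)
      then show "(a,b,L) \<in> fences_of (n+1-s) B" using f(1) by simp
    qed
  next
    fix p q assume p: "p \<in> perms s" and q: "q \<in> perms (n+1-s)"
    show "\<exists>X Y. X@p@Y \<in> perms n \<and> filter (\<lambda>x. s \<le> x) (X@p@Y) = map (\<lambda>x. x + (s-1)) q
                 \<and> (\<forall>x\<in>set X \<union> set Y. s < x)" using mergeA[OF p q] unfolding sh_def by blast
  next
    fix p q assume p: "p \<in> perms s" and q: "q \<in> perms (n+1-s)"
    obtain Q1 Q2 where Q: "map sh q = Q1@s#Q2" "\<forall>x\<in>set Q1. s < x" "\<forall>x\<in>set Q2. s < x"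
      using split_high[of "map sh q" s n] hq[OF q] sn' by auto
    obtain P1 P2 where P: "p = P1@s#P2" "\<forall>x\<in>set P1. x < s" "\<forall>x\<in>set P2. x < s"
      using split_low[OF p] s2 by auto
    have dq: "distinct (Q1@s#Q2)" "set (Q1@s#Q2) = {s..n}" using hq[OF q] Q(1) by auto
    have dp: "distinct (P1@s#P2)" "set (P1@s#P2) = {1..s}" using hp[OF p] P by auto
    have "set (P1@map sh q@P2) = {1..n}"
    proof -
      have e: "set (P1@map sh q@P2) = (set (P1@s#P2) - {s}) \<union> set (Q1@s#Q2)" using dp P Q by auto
      have "(set (P1@s#P2) - {s}) \<union> set (Q1@s#Q2) = ({1..s} - {s}) \<union> {s..n}" using dq dp by simp
      also have "\<dots> = {1..n}" using sn' s2 by auto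
      finally show ?thesis using e by simp
    qed
    moreover have "distinct (P1@map sh q@P2)" using dq dp Q P by fastforce
    ultimately have w: "P1@map sh q@P2 \<in> perms n" by (simp add: perms_def)
    have "filter (\<lambda>x. x \<le> s) (P1@map sh q@P2) = p"
    proof -
      have "filter (\<lambda>x. x \<le> s) P1 = P1" "filter (\<lambda>x. x \<le> s) P2 = P2" using P by (auto intro!: filter_True)
      moreover have "filter (\<lambda>x. x \<le> s) Q1 = []" "filter (\<lambda>x. x \<le> s) Q2 = []"
        using Q by (auto simp: filter_empty_conv)
      then have "filter (\<lambda>x. x \<le> s) (map sh q) = [s]" using Q by simp
      ultimately show ?thesis using P by simp
    qed
    moreover have "\<forall>x\<in>set P1 \<union> set P2. x < s" using P by auto
    ultimately show "\<exists>X Y. X@map (\<lambda>x. x + (s-1)) q@Y \<in> perms n \<and>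
        filter (\<lambda>x. x \<le> s) (X@map (\<lambda>x. x + (s-1)) q@Y) = p \<and> (\<forall>x\<in>set X \<union> set Y. x < s)"
      using w unfolding sh_def by blast
  next
    fix p p' q q' assume pp: "p \<in> perms s" "p' \<in> perms s" and qq: "q \<in> perms (n+1-s)" "q' \<in> perms (n+1-s)"
      and le: "weak_le p p'" "weak_le q q'"
    obtain X Y where W: "X@p@Y \<in> perms n" "filter (\<lambda>x. s \<le> x) (X@p@Y) = map sh q"
       "filter (\<lambda>x. x \<le> s) (X@p@Y) = p" "\<forall>x\<in>set X \<union> set Y. s < x"
       "\<forall>b a. a \<in> set p \<longrightarrow> a < s \<longrightarrow> s < b \<longrightarrow> (bef (X@p@Y) b a \<longleftrightarrow> bef (map sh q) b s)"
      using mergeA[OF pp(1) qq(1)] by blast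
    obtain X' Y' where W': "X'@p'@Y' \<in> perms n" "filter (\<lambda>x. s \<le> x) (X'@p'@Y') = map sh q'"
       "filter (\<lambda>x. x \<le> s) (X'@p'@Y') = p'" "\<forall>x\<in>set X' \<union> set Y'. s < x"
       "\<forall>b a. a \<in> set p' \<longrightarrow> a < s \<longrightarrow> s < b \<longrightarrow> (bef (X'@p'@Y') b a \<longleftrightarrow> bef (map sh q') b s)"
      using mergeA[OF pp(2) qq(2)] by blast
    have lq: "weak_le (map sh q) (map sh q')" using map_add_mono[OF le(2)] unfolding sh_def .
    have "weak_le (X@p@Y) (X'@p'@Y')" unfolding weak_le_def
    proof
      fix e assume e: "e \<in> inversions (X@p@Y)"
      obtain a b where ab: "e = (a,b)" by (cases e)
      have h: "a < b" "bef (X@p@Y) b a" using e ab unfolding inv_bef by auto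
      have ins: "a \<in> {1..n}" "b \<in> {1..n}" using bef_set[OF h(2)] W(1) by (auto simp: perms_def)
      have "bef (X'@p'@Y') b a"
      proof (cases "b \<le> s")
        case True
        then have "bef p b a" using h W(3) bef_filter[of "\<lambda>x. x \<le> s" "X@p@Y" b a] by simp
        then have "(a,b) \<in> inversions p'" using le(1) h unfolding weak_le_def inv_bef by auto
        then show ?thesis using True h W'(3) bef_filter[of "\<lambda>x. x \<le> s" "X'@p'@Y'" b a] unfolding inv_bef by simp
      next
        case False
        show ?thesis
        proof (cases "s \<le> a")
          case True
          then have "bef (map sh q) b a" using h W(2) bef_filter[of "\<lambda>x. s \<le> x" "X@p@Y" b a] by simp
          then have "(a,b) \<in> inversions (map sh q')" using lq h unfolding weak_le_def inv_bef by auto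
          then show ?thesis using True h W'(2) bef_filter[of "\<lambda>x. s \<le> x" "X'@p'@Y'" b a] unfolding inv_bef by simp
        next
          case False2: False
          have ap: "a \<in> set p" "a \<in> set p'" using pp ins False2 by (auto simp: perms_def)
          have "bef (map sh q) b s" using W(5) ap h False False2 by auto
          then have "(s,b) \<in> inversions (map sh q)" using False unfolding inv_bef by auto
          then have "(s,b) \<in> inversions (map sh q')" using lq unfolding weak_le_def by auto
          then have "bef (map sh q') b s" unfolding inv_bef by auto
          then show ?thesis using W'(5) ap False False2 by auto
        qed
      qed
      then show "e \<in> inversions (X'@p'@Y')" using ab h unfolding inv_bef by auto
    qed
    moreover have "map (\<lambda>x. x - (s-1)) (filter (\<lambda>x. s \<le> x) (X@p@Y)) = q"
      "map (\<lambda>x. x - (s-1)) (filter (\<lambda>x. s \<le> x) (X'@p'@Y')) = q'"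
      using W(2) W'(2) unfolding sh_def by (simp_all add: map_idI)
    ultimately show "\<exists>w w'. w \<in> perms n \<and> w' \<in> perms n \<and> filter (\<lambda>x. x \<le> s) w = p
                 \<and> map (\<lambda>x. x - (s-1)) (filter (\<lambda>x. s \<le> x) w) = q
                 \<and> filter (\<lambda>x. x \<le> s) w' = p' \<and> map (\<lambda>x. x - (s-1)) (filter (\<lambda>x. s \<le> x) w') = q'
                 \<and> weak_le w w'" using W W' by blast
  qed
  show ?thesis using iso by simp
qed


theorem mainTheorem7:
  fixes n s :: nat
    and R A B :: "(nat list \<times> nat list) set"
  assumes "n \<ge> 2" and "1 \<le> s" and "s \<le> n"
    and "lattice_cong (n+1) R"
    and "(s, s+1, {}) \<in> fences_of (n+1) R"
    and "lattice_cong s A"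
    and "fences_of s A = {(a,b,L) \<in> fences_of (n+1) R. 1 \<le> a \<and> a < b \<and> b \<le> s}"
    and "lattice_cong (n+1-s) B"
    and "fences_of (n+1-s) B =
           unshift_fence s ` {(a,b,L) \<in> fences_of (n+1) R. s+1 \<le> a \<and> a < b \<and> b \<le> n+1}"
  shows "order_iso (quot (n+1) R) quot_le (quot s A \<times> quot (n+1-s) B) (prod_le quot_le quot_le)
         \<and> (2 \<le> s \<and> s \<le> n - 1 \<longrightarrow>
              (\<forall>R'. lattice_cong n R' \<and>
                 fences_of n R' = fences_of s A \<union> shift_fence (s-1) ` fences_of (n+1-s) B
                    \<union> fence_downset n {(s-1, s+1, {}), (s-1, s+1, {s})}
               \<longrightarrow> order_iso (quot n R') quot_le (quot s A \<times> quot (n+1-s) B) (prod_le quot_le quot_le)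
                   \<and> order_iso (quot (n+1) R) quot_le (quot n R') quot_le))"
proof -
  have i1: "order_iso (quot (n+1) R) quot_le (quot s A \<times> quot (n+1-s) B) (prod_le quot_le quot_le)"
    using part1[OF assms] .
  have "order_iso (quot n R') quot_le (quot s A \<times> quot (n+1-s) B) (prod_le quot_le quot_le)
         \<and> order_iso (quot (n+1) R) quot_le (quot n R') quot_le"
    if h: "2 \<le> s \<and> s \<le> n - 1" "lattice_cong n R' \<and>
                 fences_of n R' = fences_of s A \<union> shift_fence (s-1) ` fences_of (n+1-s) B
                    \<union> fence_downset n {(s-1, s+1, {}), (s-1, s+1, {s})}" for R'
  proof -
    have i2: "order_iso (quot n R') quot_le (quot s A \<times> quot (n+1-s) B) (prod_le quot_le quot_le)"
      using part2[of s n A B R'] h assms(6,8) by blast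
    show ?thesis using i2 order_iso_trans[OF i1 order_iso_sym[OF i2]] by blast
  qed
  then show ?thesis using i1 by blast
qed

end
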